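(* Let $k$ be a commutative ring, $H$ a cocommutative Hopf algebra over $k$, $A$ a cleft right $H$-comodule algebra with commutative $B=A^{\mathrm{co}H}$, and regard $B$ as a left $H$-module algebra via $h\cdot b=t(h_{(1)})bu(h_{(2)})$. Then the following data define a subcategory $\mathcal{X}_A$ of $\mathcal{C}_A$ with the two objects $\mathbf{1},\mathbf{2}$: $\mathcal{X}_A(\mathbf{1},\mathbf{1})=Z^1(H,B)$; $\mathcal{X}_A(\mathbf{2},\mathbf{1})=\Omega_A$; $\mathcal{X}_A(\mathbf{2},\mathbf{2})=\{\omega\in\mathrm{Hom}(H,B):\omega\circ S\in Z^1(H,B)\}$; $\mathcal{X}_A(\mathbf{1},\mathbf{2})=\{t\circ S:t\in\Omega_A\}$.
   Context: $\Delta(h)=h_{(1)}\otimes h_{(2)}$, antipode $S$, $\rho(a)=a_{[0]}\otimes a_{[1]}$, $B=\{a:\rho(a)=a\otimes1\}$. $A$ is cleft: there is a convolution invertible $H$-colinear $t:H\to A$ (colinear: $\rho(t(h))=t(h_{(1)})\otimes h_{(2)}$), with convolution inverse $u$; convolution: $(f*g)(h)=f(h_{(1)})g(h_{(2)})$. The module algebra structure above is independent of $t$. $Z^1(H,B)$ is the set of convolution invertible $k$-linear $v:H\to B$ with $v(hk)=(h_{(1)}\cdot v(k))v(h_{(2)})$ for all $h,k$. $\Omega_A$ is the set of $H$-colinear algebra maps $H\to A$. $\mathcal{C}_A$: two objects $\mathbf{1},\mathbf{2}$; $\mathcal{C}_A(\mathbf{i},\mathbf{j})$ denotes morphisms $\mathbf{i}\to\mathbf{j}$,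 sets of $k$-linear maps $H\to A$: $\mathcal{C}_A(\mathbf{1},\mathbf{1})=\{v:\rho(v(h))=v(h)\otimes1\}=\mathrm{Hom}(H,B)$; $\mathcal{C}_A(\mathbf{2},\mathbf{1})=\{t:\rho(t(h))=t(h_{(1)})\otimes h_{(2)}\}$; $\mathcal{C}_A(\mathbf{1},\mathbf{2})=\{u:\rho(u(h))=u(h_{(2)})\otimes S(h_{(1)})\}$; $\mathcal{C}_A(\mathbf{2},\mathbf{2})=\{w:\rho(w(h))=w(h_{(2)})\otimes S(h_{(1)})h_{(3)}\}$ (which equals $\mathrm{Hom}(H,B)$ here since $H$ is cocommutative). Composite of $f:\mathbf{i}\to\mathbf{j}$ and $g:\mathbf{j}\to\mathbf{k}$ is $g*f$. *)

theory Defs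
  imports Complex_Main "HOL-Library.Function_Algebras"
begin

text \<open>An element of M (x) N is represented by a finite list of pairs (m,n), standing for the
formal sum of the simple tensors m (x) n (scalars are absorbed into the first factor).
Two such lists represent the same tensor iff the difference of the corresponding elements of
the free k-module on M x N lies in the k-submodule spanned by the bilinearity relations.\<close>

definition fsum :: "'x list \<Rightarrow> ('x \<Rightarrow> 'k::comm_ring_1)" where
  "fsum xs = (\<lambda>p. of_nat (count_list xs p))"

inductive_set tens2_rel ::
  "('k::comm_ring_1 \<Rightarrow> 'm::ab_group_add \<Rightarrow> 'm) \<Rightarrow> ('k \<Rightarrow> 'n::ab_group_add \<Rightarrow> 'n)
     \<Rightarrow> ('m \<times> 'n \<Rightarrow> 'k) set"
  for sM sN where
  zero: "0 \<in> tens2_rel sM sN"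
| addL: "fsum [(m + m', n)] - fsum [(m, n)] - fsum [(m', n)] \<in> tens2_rel sM sN"
| addR: "fsum [(m, n + n')] - fsum [(m, n)] - fsum [(m, n')] \<in> tens2_rel sM sN"
| smulL: "fsum [(sM r m, n)] - (\<lambda>p. r * fsum [(m, n)] p) \<in> tens2_rel sM sN"
| smulR: "fsum [(m, sN r n)] - (\<lambda>p. r * fsum [(m, n)] p) \<in> tens2_rel sM sN"
| add: "x \<in> tens2_rel sM sN \<Longrightarrow> y \<in> tens2_rel sM sN \<Longrightarrow> x + y \<in> tens2_rel sM sN"
| scale: "x \<in> tens2_rel sM sN \<Longrightarrow> (\<lambda>p. r * x p) \<in> tens2_rel sM sN"

inductive_set tens3_rel ::
  "('k::comm_ring_1 \<Rightarrow> 'm::ab_group_add \<Rightarrow> 'm) \<Rightarrow> ('k \<Rightarrow> 'n::ab_group_add \<Rightarrow> 'n)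
     \<Rightarrow> ('k \<Rightarrow> 'p::ab_group_add \<Rightarrow> 'p) \<Rightarrow> ('m \<times> 'n \<times> 'p \<Rightarrow> 'k) set"
  for sM sN sP where
  zero: "0 \<in> tens3_rel sM sN sP"
| add1: "fsum [(m + m', n, q)] - fsum [(m, n, q)] - fsum [(m', n, q)] \<in> tens3_rel sM sN sP"
| add2: "fsum [(m, n + n', q)] - fsum [(m, n, q)] - fsum [(m, n', q)] \<in> tens3_rel sM sN sP"
| add3: "fsum [(m, n, q + q')] - fsum [(m, n, q)] - fsum [(m, n, q')] \<in> tens3_rel sM sN sP"
| smul1: "fsum [(sM r m, n, q)] - (\<lambda>p. r * fsum [(m, n, q)] p) \<in> tens3_rel sM sN sP"
| smul2: "fsum [(m, sN r n, q)] - (\<lambda>p. r * fsum [(m, n, q)] p) \<in> tens3_rel sM sN sP"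
| smul3: "fsum [(m, n, sP r q)] - (\<lambda>p. r * fsum [(m, n, q)] p) \<in> tens3_rel sM sN sP"
| add: "x \<in> tens3_rel sM sN sP \<Longrightarrow> y \<in> tens3_rel sM sN sP \<Longrightarrow> x + y \<in> tens3_rel sM sN sP"
| scale: "x \<in> tens3_rel sM sN sP \<Longrightarrow> (\<lambda>p. r * x p) \<in> tens3_rel sM sN sP"

definition teq2 :: "('k::comm_ring_1 \<Rightarrow> 'm::ab_group_add \<Rightarrow> 'm) \<Rightarrow> ('k \<Rightarrow> 'n::ab_group_add \<Rightarrow> 'n)
     \<Rightarrow> ('m \<times> 'n) list \<Rightarrow> ('m \<times> 'n) list \<Rightarrow> bool" where
  "teq2 sM sN xs ys \<longleftrightarrow> (fsum xs - fsum ys) \<in> tens2_rel sM sN"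

definition teq3 :: "('k::comm_ring_1 \<Rightarrow> 'm::ab_group_add \<Rightarrow> 'm) \<Rightarrow> ('k \<Rightarrow> 'n::ab_group_add \<Rightarrow> 'n)
     \<Rightarrow> ('k \<Rightarrow> 'p::ab_group_add \<Rightarrow> 'p)
     \<Rightarrow> ('m \<times> 'n \<times> 'p) list \<Rightarrow> ('m \<times> 'n \<times> 'p) list \<Rightarrow> bool" where
  "teq3 sM sN sP xs ys \<longleftrightarrow> (fsum xs - fsum ys) \<in> tens3_rel sM sN sP"

definition tmult :: "('a::times \<times> 'b::times) list \<Rightarrow> ('a \<times> 'b) list \<Rightarrow> ('a \<times> 'b) list" where
  "tmult xs ys = concat (map (\<lambda>(a, b). map (\<lambda>(c, d). (a * c, b * d)) ys) xs)"

definition k_algebra :: "('k::comm_ring_1 \<Rightarrow> 'r::ring_1 \<Rightarrow> 'r) \<Rightarrow> bool" where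
  "k_algebra s \<longleftrightarrow> module s \<and> (\<forall>r x y. s r (x * y) = s r x * y \<and> s r (x * y) = x * s r y)"

definition D_left :: "('h \<Rightarrow> ('h \<times> 'h) list) \<Rightarrow> ('x \<Rightarrow> ('y \<times> 'h) list) \<Rightarrow> 'x \<Rightarrow> ('y \<times> 'h \<times> 'h) list" where
  "D_left \<Delta> \<rho> x = concat (map (\<lambda>(a, y). map (\<lambda>(y1, y2). (a, y1, y2)) (\<Delta> y)) (\<rho> x))"

definition D_right :: "('y \<Rightarrow> ('y \<times> 'h) list) \<Rightarrow> ('x \<Rightarrow> ('y \<times> 'h) list) \<Rightarrow> 'x \<Rightarrow> ('y \<times> 'h \<times> 'h) list" where
  "D_right \<rho>' \<rho> x = concat (map (\<lambda>(a, y). map (\<lambda>(a1, a2). (a1, a2, y)) (\<rho>' a)) (\<rho> x))"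

definition hopf_algebra ::
  "('k::comm_ring_1 \<Rightarrow> 'h::ring_1 \<Rightarrow> 'h) \<Rightarrow> ('h \<Rightarrow> ('h \<times> 'h) list) \<Rightarrow> ('h \<Rightarrow> 'k)
     \<Rightarrow> ('h \<Rightarrow> 'h) \<Rightarrow> bool" where
  "hopf_algebra sH \<Delta> \<epsilon> S \<longleftrightarrow>
     k_algebra sH \<and>
     \<comment> \<open>Delta is k-linear\<close>
     (\<forall>x y. teq2 sH sH (\<Delta> (x + y)) (\<Delta> x @ \<Delta> y)) \<and>
     (\<forall>r x. teq2 sH sH (\<Delta> (sH r x)) (map (\<lambda>(a, b). (sH r a, b)) (\<Delta> x))) \<and>
     \<comment> \<open>epsilon and S are k-linear\<close>
     module_hom sH ((*) :: 'k \<Rightarrow> 'k \<Rightarrow> 'k) \<epsilon> \<and>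
     module_hom sH sH S \<and>
     \<comment> \<open>coassociativity and counit\<close>
     (\<forall>h. teq3 sH sH sH (D_right \<Delta> \<Delta> h) (D_left \<Delta> \<Delta> h)) \<and>
     (\<forall>h. (\<Sum>(a, b)\<leftarrow>\<Delta> h. sH (\<epsilon> a) b) = h) \<and>
     (\<forall>h. (\<Sum>(a, b)\<leftarrow>\<Delta> h. sH (\<epsilon> b) a) = h) \<and>
     \<comment> \<open>Delta and epsilon are algebra maps\<close>
     (\<forall>x y. teq2 sH sH (\<Delta> (x * y)) (tmult (\<Delta> x) (\<Delta> y))) \<and>
     teq2 sH sH (\<Delta> 1) [(1, 1)] \<and>
     (\<forall>x y. \<epsilon> (x * y) = \<epsilon> x * \<epsilon> y) \<and> \<epsilon> 1 = 1 \<and>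
     \<comment> \<open>antipode\<close>
     (\<forall>h. (\<Sum>(a, b)\<leftarrow>\<Delta> h. S a * b) = sH (\<epsilon> h) 1) \<and>
     (\<forall>h. (\<Sum>(a, b)\<leftarrow>\<Delta> h. a * S b) = sH (\<epsilon> h) 1)"

definition cocommutative :: "('k::comm_ring_1 \<Rightarrow> 'h::ring_1 \<Rightarrow> 'h) \<Rightarrow> ('h \<Rightarrow> ('h \<times> 'h) list) \<Rightarrow> bool" where
  "cocommutative sH \<Delta> \<longleftrightarrow> (\<forall>h. teq2 sH sH (map prod.swap (\<Delta> h)) (\<Delta> h))"

definition right_comodule_algebra ::
  "('k::comm_ring_1 \<Rightarrow> 'a::ring_1 \<Rightarrow> 'a) \<Rightarrow> ('a \<Rightarrow> ('a \<times> 'h) list)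
     \<Rightarrow> ('k \<Rightarrow> 'h::ring_1 \<Rightarrow> 'h) \<Rightarrow> ('h \<Rightarrow> ('h \<times> 'h) list) \<Rightarrow> ('h \<Rightarrow> 'k) \<Rightarrow> bool" where
  "right_comodule_algebra sA \<rho> sH \<Delta> \<epsilon> \<longleftrightarrow>
     k_algebra sA \<and>
     (\<forall>x y. teq2 sA sH (\<rho> (x + y)) (\<rho> x @ \<rho> y)) \<and>
     (\<forall>r x. teq2 sA sH (\<rho> (sA r x)) (map (\<lambda>(a, b). (sA r a, b)) (\<rho> x))) \<and>
     (\<forall>a. teq3 sA sH sH (D_right \<rho> \<rho> a) (D_left \<Delta> \<rho> a)) \<and>
     (\<forall>a. (\<Sum>(x, h)\<leftarrow>\<rho> a. sA (\<epsilon> h) x) = a) \<and>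
     (\<forall>x y. teq2 sA sH (\<rho> (x * y)) (tmult (\<rho> x) (\<rho> y))) \<and>
     teq2 sA sH (\<rho> 1) [(1, 1)]"

definition coinv :: "('k::comm_ring_1 \<Rightarrow> 'a::ring_1 \<Rightarrow> 'a) \<Rightarrow> ('k \<Rightarrow> 'h::ring_1 \<Rightarrow> 'h)
     \<Rightarrow> ('a \<Rightarrow> ('a \<times> 'h) list) \<Rightarrow> 'a set" where
  "coinv sA sH \<rho> = {a. teq2 sA sH (\<rho> a) [(a, 1)]}"

definition conv :: "('h \<Rightarrow> ('h \<times> 'h) list) \<Rightarrow> ('h \<Rightarrow> 'a::ring_1) \<Rightarrow> ('h \<Rightarrow> 'a) \<Rightarrow> 'h \<Rightarrow> 'a" where
  "conv \<Delta> f g = (\<lambda>h. \<Sum>(x, y)\<leftarrow>\<Delta> h. f x * g y)"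

definition cunit :: "('k::comm_ring_1 \<Rightarrow> 'a::ring_1 \<Rightarrow> 'a) \<Rightarrow> ('h \<Rightarrow> 'k) \<Rightarrow> 'h \<Rightarrow> 'a" where
  "cunit sA \<epsilon> = (\<lambda>h. sA (\<epsilon> h) 1)"

definition HomHA :: "('k::comm_ring_1 \<Rightarrow> 'h::ring_1 \<Rightarrow> 'h) \<Rightarrow> ('k \<Rightarrow> 'a::ring_1 \<Rightarrow> 'a) \<Rightarrow> ('h \<Rightarrow> 'a) set" where
  "HomHA sH sA = {f. module_hom sH sA f}"

definition HomHB :: "('k::comm_ring_1 \<Rightarrow> 'h::ring_1 \<Rightarrow> 'h) \<Rightarrow> ('k \<Rightarrow> 'a::ring_1 \<Rightarrow> 'a)
     \<Rightarrow> ('a \<Rightarrow> ('a \<times> 'h) list) \<Rightarrow> ('h \<Rightarrow> 'a) set" where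
  "HomHB sH sA \<rho> = {f \<in> HomHA sH sA. \<forall>h. f h \<in> coinv sA sH \<rho>}"

definition colinear :: "('k::comm_ring_1 \<Rightarrow> 'a::ring_1 \<Rightarrow> 'a) \<Rightarrow> ('k \<Rightarrow> 'h::ring_1 \<Rightarrow> 'h)
     \<Rightarrow> ('a \<Rightarrow> ('a \<times> 'h) list) \<Rightarrow> ('h \<Rightarrow> ('h \<times> 'h) list) \<Rightarrow> ('h \<Rightarrow> 'a) \<Rightarrow> bool" where
  "colinear sA sH \<rho> \<Delta> t \<longleftrightarrow> (\<forall>h. teq2 sA sH (\<rho> (t h)) (map (\<lambda>(x, y). (t x, y)) (\<Delta> h)))"

definition act :: "('h \<Rightarrow> ('h \<times> 'h) list) \<Rightarrow> ('h \<Rightarrow> 'a::ring_1) \<Rightarrow> ('h \<Rightarrow> 'a) \<Rightarrow> 'h \<Rightarrow> 'a \<Rightarrow> 'a" where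
  "act \<Delta> t u h b = (\<Sum>(x, y)\<leftarrow>\<Delta> h. t x * b * u y)"

definition Z1 :: "('k::comm_ring_1 \<Rightarrow> 'h::ring_1 \<Rightarrow> 'h) \<Rightarrow> ('h \<Rightarrow> ('h \<times> 'h) list) \<Rightarrow> ('h \<Rightarrow> 'k)
     \<Rightarrow> ('k \<Rightarrow> 'a::ring_1 \<Rightarrow> 'a) \<Rightarrow> ('a \<Rightarrow> ('a \<times> 'h) list) \<Rightarrow> ('h \<Rightarrow> 'a) \<Rightarrow> ('h \<Rightarrow> 'a)
     \<Rightarrow> ('h \<Rightarrow> 'a) set" where
  "Z1 sH \<Delta> \<epsilon> sA \<rho> t u =
     {v \<in> HomHB sH sA \<rho>.
        (\<exists>w \<in> HomHB sH sA \<rho>. conv \<Delta> v w = cunit sA \<epsilon> \<and> conv \<Delta> w v = cunit sA \<epsilon>) \<and>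
        (\<forall>h k. v (h * k) = (\<Sum>(x, y)\<leftarrow>\<Delta> h. act \<Delta> t u x (v k) * v y))}"

definition OmegaA :: "('k::comm_ring_1 \<Rightarrow> 'h::ring_1 \<Rightarrow> 'h) \<Rightarrow> ('h \<Rightarrow> ('h \<times> 'h) list)
     \<Rightarrow> ('k \<Rightarrow> 'a::ring_1 \<Rightarrow> 'a) \<Rightarrow> ('a \<Rightarrow> ('a \<times> 'h) list) \<Rightarrow> ('h \<Rightarrow> 'a) set" where
  "OmegaA sH \<Delta> sA \<rho> =
     {f \<in> HomHA sH sA. f 1 = 1 \<and> (\<forall>x y. f (x * y) = f x * f y) \<and> colinear sA sH \<rho> \<Delta> f}"

datatype obj = One | Two

definition D3 :: "('h \<Rightarrow> ('h \<times> 'h) list) \<Rightarrow> 'h \<Rightarrow> ('h \<times> 'h \<times> 'h) list" where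
  "D3 \<Delta> h = concat (map (\<lambda>(x, y). map (\<lambda>(y1, y2). (x, y1, y2)) (\<Delta> y)) (\<Delta> h))"

text \<open>CA sH Delta S sA rho i j = C_A(i, j), the morphisms i -> j.\<close>
fun CA :: "('k::comm_ring_1 \<Rightarrow> 'h::ring_1 \<Rightarrow> 'h) \<Rightarrow> ('h \<Rightarrow> ('h \<times> 'h) list) \<Rightarrow> ('h \<Rightarrow> 'h)
     \<Rightarrow> ('k \<Rightarrow> 'a::ring_1 \<Rightarrow> 'a) \<Rightarrow> ('a \<Rightarrow> ('a \<times> 'h) list) \<Rightarrow> obj \<Rightarrow> obj \<Rightarrow> ('h \<Rightarrow> 'a) set" where
  "CA sH \<Delta> S sA \<rho> One One =
     {v \<in> HomHA sH sA. \<forall>h. teq2 sA sH (\<rho> (v h)) [(v h, 1)]}"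
| "CA sH \<Delta> S sA \<rho> Two One =
     {t \<in> HomHA sH sA. \<forall>h. teq2 sA sH (\<rho> (t h)) (map (\<lambda>(x, y). (t x, y)) (\<Delta> h))}"
| "CA sH \<Delta> S sA \<rho> One Two =
     {u \<in> HomHA sH sA. \<forall>h. teq2 sA sH (\<rho> (u h)) (map (\<lambda>(x, y). (u y, S x)) (\<Delta> h))}"
| "CA sH \<Delta> S sA \<rho> Two Two =
     {w \<in> HomHA sH sA. \<forall>h. teq2 sA sH (\<rho> (w h)) (map (\<lambda>(x, y, z). (w y, S x * z)) (D3 \<Delta> h))}"

fun XA :: "('k::comm_ring_1 \<Rightarrow> 'h::ring_1 \<Rightarrow> 'h) \<Rightarrow> ('h \<Rightarrow> ('h \<times> 'h) list) \<Rightarrow> ('h \<Rightarrow> 'k) \<Rightarrow> ('h \<Rightarrow> 'h)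
     \<Rightarrow> ('k \<Rightarrow> 'a::ring_1 \<Rightarrow> 'a) \<Rightarrow> ('a \<Rightarrow> ('a \<times> 'h) list) \<Rightarrow> ('h \<Rightarrow> 'a) \<Rightarrow> ('h \<Rightarrow> 'a)
     \<Rightarrow> obj \<Rightarrow> obj \<Rightarrow> ('h \<Rightarrow> 'a) set" where
  "XA sH \<Delta> \<epsilon> S sA \<rho> t u One One = Z1 sH \<Delta> \<epsilon> sA \<rho> t u"
| "XA sH \<Delta> \<epsilon> S sA \<rho> t u Two One = OmegaA sH \<Delta> sA \<rho>"
| "XA sH \<Delta> \<epsilon> S sA \<rho> t u Two Two = {\<omega> \<in> HomHB sH sA \<rho>. \<omega> \<circ> S \<in> Z1 sH \<Delta> \<epsilon> sA \<rho> t u}"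
| "XA sH \<Delta> \<epsilon> S sA \<rho> t u One Two = {t' \<circ> S | t'. t' \<in> OmegaA sH \<Delta> sA \<rho>}"

end

theory Submission
  imports Defs
begin

section \<open>Submodules and linearity modulo a submodule\<close>

definition submod :: "('k::comm_ring_1 \<Rightarrow> 'r::ab_group_add \<Rightarrow> 'r) \<Rightarrow> 'r set \<Rightarrow> bool" where
  "submod sR R \<longleftrightarrow> module sR \<and> 0 \<in> R \<and> (\<forall>x\<in>R. \<forall>y\<in>R. x + y \<in> R) \<and> (\<forall>c. \<forall>x\<in>R. sR c x \<in> R)"

definition linm :: "('k::comm_ring_1 \<Rightarrow> 'x::ab_group_add \<Rightarrow> 'x) \<Rightarrow> ('k \<Rightarrow> 'r::ab_group_add \<Rightarrow> 'r) \<Rightarrow> 'r set \<Rightarrow> ('x \<Rightarrow> 'r) \<Rightarrow> bool" where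
  "linm sX sR R f \<longleftrightarrow> (\<forall>x y. f (x + y) - (f x + f y) \<in> R) \<and> (\<forall>c x. f (sX c x) - sR c (f x) \<in> R)"

lemma submod_module: "submod sR R \<Longrightarrow> module sR" by (simp add: submod_def)
lemma submod_0: "submod sR R \<Longrightarrow> 0 \<in> R" by (simp add: submod_def)
lemma submod_add: "submod sR R \<Longrightarrow> x \<in> R \<Longrightarrow> y \<in> R \<Longrightarrow> x + y \<in> R" by (simp add: submod_def)
lemma submod_scale: "submod sR R \<Longrightarrow> x \<in> R \<Longrightarrow> sR c x \<in> R" by (simp add: submod_def)
lemma submod_uminus: "submod sR R \<Longrightarrow> x \<in> R \<Longrightarrow> - x \<in> R"
  using submod_scale[of sR R x "-1"] module.scale_minus_left[of sR 1 x] submod_module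
  by (metis module.scale_one)
lemma submod_diff: "submod sR R \<Longrightarrow> x \<in> R \<Longrightarrow> y \<in> R \<Longrightarrow> x - y \<in> R"
  by (metis diff_conv_add_uminus submod_add submod_uminus)
lemma submod_trans: "submod sR R \<Longrightarrow> a - b \<in> R \<Longrightarrow> b - c \<in> R \<Longrightarrow> a - c \<in> R"
  using submod_add[of sR R "a - b" "b - c"] by simp
lemma submod_sym: "submod sR R \<Longrightarrow> a - b \<in> R \<Longrightarrow> b - a \<in> R"
  using submod_uminus[of sR R "a - b"] by simp
lemma submod_refl: "submod sR R \<Longrightarrow> a - a \<in> R"
  by (simp add: submod_0)
lemma submod_add2: "submod sR R \<Longrightarrow> a - b \<in> R \<Longrightarrow> c - d \<in> R \<Longrightarrow> (a + c) - (b + d) \<in> R"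
  using submod_add[of sR R "a - b" "c - d"] by (simp add: algebra_simps)
lemma submod_diff2: "submod sR R \<Longrightarrow> a - b \<in> R \<Longrightarrow> c - d \<in> R \<Longrightarrow> (a - c) - (b - d) \<in> R"
  using submod_diff[of sR R "a - b" "c - d"] by (simp add: algebra_simps)
lemma submod_scale2: "submod sR R \<Longrightarrow> a - b \<in> R \<Longrightarrow> sR c a - sR c b \<in> R"
  using submod_scale[of sR R "a - b" c] module.scale_right_diff_distrib[of sR c a b] submod_module
  by metis

lemma submod_sum_list: "submod sR R \<Longrightarrow> (\<And>x. x \<in> set xs \<Longrightarrow> f x - g x \<in> R) \<Longrightarrow>
   sum_list (map f xs) - sum_list (map g xs) \<in> R"
proof (induction xs)
  case Nil then show ?case by (simp add: submod_0)
next
  case (Cons a xs)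
  then show ?case using submod_add2[of sR R "f a" "g a" "sum_list (map f xs)" "sum_list (map g xs)"] by simp
qed

lemma submod_zero: "module sR \<Longrightarrow> submod sR {0}"
  by (auto simp: submod_def module.scale_zero_right)

lemma module_scale_sum_list: "module sR \<Longrightarrow> sR c (sum_list (map f xs)) = sum_list (map (\<lambda>x. sR c (f x)) xs)"
  by (induction xs) (auto simp: module.scale_right_distrib module.scale_zero_right)

lemma linm_0: "linm sX sR R f \<Longrightarrow> submod sR R \<Longrightarrow> f 0 \<in> R"
proof -
  assume a: "linm sX sR R f" "submod sR R"
  have "f (0 + 0) - (f 0 + f 0) \<in> R" using a(1) unfolding linm_def by blast
  then have "- f 0 \<in> R" by simp
  then show ?thesis using submod_uminus[OF a(2), of "- f 0"] by simp
qed

lemma linm_sum_list: "linm sX sR R f \<Longrightarrow> submod sR R \<Longrightarrow>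
   f (sum_list (map g xs)) - sum_list (map (\<lambda>x. f (g x)) xs) \<in> R"
proof (induction xs)
  case Nil then show ?case using linm_0 by simp
next
  case (Cons a xs)
  have "f (g a + sum_list (map g xs)) - (f (g a) + f (sum_list (map g xs))) \<in> R"
    using Cons.prems unfolding linm_def by blast
  moreover have "(f (g a) + f (sum_list (map g xs))) - (f (g a) + sum_list (map (\<lambda>x. f (g x)) xs)) \<in> R"
    using submod_add2[OF Cons.prems(2) submod_refl[OF Cons.prems(2)] Cons.IH[OF Cons.prems]] .
  ultimately show ?case using submod_trans[OF Cons.prems(2)] by simp
qed

section \<open>Linear extension to finitely supported functions\<close>

definition lext :: "('k::comm_ring_1 \<Rightarrow> 'r::ab_group_add \<Rightarrow> 'r) \<Rightarrow> ('p \<Rightarrow> 'r) \<Rightarrow> ('p \<Rightarrow> 'k) \<Rightarrow> 'r" where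
  "lext sR \<phi> F = (\<Sum>p\<in>{p. F p \<noteq> 0}. sR (F p) (\<phi> p))"

definition fin :: "('p \<Rightarrow> 'k::comm_ring_1) \<Rightarrow> bool" where
  "fin F \<longleftrightarrow> finite {p. F p \<noteq> 0}"

lemma lext_superset:
  assumes "module sR" "finite A" "{p. F p \<noteq> 0} \<subseteq> A"
  shows "lext sR \<phi> F = (\<Sum>p\<in>A. sR (F p) (\<phi> p))"
  unfolding lext_def
  by (rule sum.mono_neutral_left) (use assms in \<open>auto simp: module.scale_zero_left\<close>)

lemma fin_add: "fin F \<Longrightarrow> fin G \<Longrightarrow> fin (F + G)"
  unfolding fin_def by (rule finite_subset[of _ "{p. F p \<noteq> 0} \<union> {p. G p \<noteq> 0}"]) auto
lemma fin_diff: "fin F \<Longrightarrow> fin G \<Longrightarrow> fin (F - G)"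
  unfolding fin_def by (rule finite_subset[of _ "{p. F p \<noteq> 0} \<union> {p. G p \<noteq> 0}"]) auto
lemma fin_scale: "fin F \<Longrightarrow> fin (\<lambda>p. r * F p)"
  unfolding fin_def by (rule finite_subset[of _ "{p. F p \<noteq> 0}"]) auto
lemma fin_fsum: "fin (fsum xs)"
  unfolding fin_def fsum_def by (rule finite_subset[of _ "set xs"]) (auto, metis count_notin of_nat_0)
lemma fin_zero: "fin 0" by (simp add: fin_def)
lemma fin_zero': "fin (\<lambda>a. 0)" by (simp add: fin_def)

lemma lext_add: assumes "module sR" "fin F" "fin G"
  shows "lext sR \<phi> (F + G) = lext sR \<phi> F + lext sR \<phi> G"
proof -
  let ?A = "{p. F p \<noteq> 0} \<union> {p. G p \<noteq> 0}"
  have fA: "finite ?A" using assms by (simp add: fin_def)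
  have "lext sR \<phi> (F + G) = (\<Sum>p\<in>?A. sR ((F+G) p) (\<phi> p))"
    by (rule lext_superset[OF assms(1) fA]) auto
  also have "\<dots> = (\<Sum>p\<in>?A. sR (F p) (\<phi> p)) + (\<Sum>p\<in>?A. sR (G p) (\<phi> p))"
    by (simp add: module.scale_left_distrib[OF assms(1)] sum.distrib)
  also have "\<dots> = lext sR \<phi> F + lext sR \<phi> G"
    by (subst (1 2) lext_superset[OF assms(1) fA]) auto
  finally show ?thesis .
qed

lemma lext_scale: assumes "module sR" "fin F"
  shows "lext sR \<phi> (\<lambda>p. r * F p) = sR r (lext sR \<phi> F)"
proof -
  let ?A = "{p. F p \<noteq> 0}"
  have fA: "finite ?A" using assms by (simp add: fin_def)
  have "lext sR \<phi> (\<lambda>p. r * F p) = (\<Sum>p\<in>?A. sR (r * F p) (\<phi> p))"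
    by (rule lext_superset[OF assms(1) fA]) auto
  also have "\<dots> = sR r (\<Sum>p\<in>?A. sR (F p) (\<phi> p))"
    by (simp add: module.scale_sum_right[OF assms(1)] module.scale_scale[OF assms(1)])
  finally show ?thesis by (simp add: lext_def)
qed

lemma lext_diff: assumes "module sR" "fin F" "fin G"
  shows "lext sR \<phi> (F - G) = lext sR \<phi> F - lext sR \<phi> G"
proof -
  have "F = (F - G) + G" by simp
  then have "lext sR \<phi> F = lext sR \<phi> (F - G) + lext sR \<phi> G"
    by (metis lext_add[OF assms(1) fin_diff[OF assms(2,3)] assms(3)])
  then show ?thesis by simp
qed

lemma fsum_Nil: "fsum [] = 0" by (simp add: fsum_def fun_eq_iff)
lemma fsum_append: "fsum (xs @ ys) = fsum xs + fsum ys" by (simp add: fsum_def fun_eq_iff)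
lemma fsum_Cons: "fsum (x # xs) = fsum [x] + fsum xs" using fsum_append[of "[x]" xs] by simp
lemma fsum_concat: "fsum (concat xss) = sum_list (map fsum xss)"
  by (induction xss) (simp_all add: fsum_Nil fsum_append)

lemma lext_single: assumes "module sR" shows "lext sR \<phi> (fsum [x]) = \<phi> x"
proof -
  have "lext sR \<phi> (fsum [x]) = (\<Sum>p\<in>{x}. sR (fsum [x] p) (\<phi> p))"
    by (rule lext_superset[OF assms]) (auto simp: fsum_def)
  then show ?thesis by (simp add: fsum_def module.scale_one[OF assms])
qed

lemma lext_fsum: assumes "module sR" shows "lext sR \<phi> (fsum xs) = sum_list (map \<phi> xs)"
proof (induction xs)
  case Nil then show ?case by (simp add: fsum_Nil lext_def)
next
  case (Cons a xs)
  then show ?case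
    by (subst fsum_Cons) (simp add: lext_add[OF assms fin_fsum fin_fsum] lext_single[OF assms])
qed

section \<open>Respecting the tensor relations\<close>

lemma helper3:
  assumes M: "module sR" and h: "\<phi> a - \<phi> b - \<phi> c \<in> R"
  shows "fin (\<lambda>p. fsum [a] p - fsum [b] p - fsum [c] p) \<and> lext sR \<phi> (\<lambda>p. fsum [a] p - fsum [b] p - fsum [c] p) \<in> R"
proof -
  have e: "(\<lambda>p. fsum [a] p - fsum [b] p - fsum [c] p) = fsum [a] - fsum [b] - fsum [c]" by (simp add: fun_eq_iff)
  show ?thesis unfolding e using h
    by (simp only: lext_diff[OF M] fin_diff fin_fsum lext_single[OF M])
qed

lemma helper2:
  assumes M: "module sR" and h: "\<phi> a - sR r (\<phi> b) \<in> R"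
  shows "fin (\<lambda>p. fsum [a] p - r * fsum [b] p) \<and> lext sR \<phi> (\<lambda>p. fsum [a] p - r * fsum [b] p) \<in> R"
proof -
  have e: "(\<lambda>p. fsum [a] p - r * fsum [b] p) = fsum [a] - (\<lambda>p. r * fsum [b] p)" by (simp add: fun_eq_iff)
  show ?thesis unfolding e using h
    by (simp only: lext_diff[OF M] fin_diff fin_fsum fin_scale lext_scale[OF M] lext_single[OF M])
qed

lemma tens2_rel_ext:
  assumes R: "submod sR R"
    and l1: "\<And>n. linm sM sR R (\<lambda>m. \<phi> m n)" and l2: "\<And>m. linm sN sR R (\<phi> m)"
    and x: "x \<in> tens2_rel sM sN"
  shows "fin x \<and> lext sR (case_prod \<phi>) x \<in> R"
  using x
proof induction
  case zero then show ?case by (simp add: fin_zero fin_zero' lext_def submod_0[OF R])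
next
  case (addL m m' n)
  have M: "module sR" using R submod_module by blast
  show ?case unfolding fun_diff_def
    by (rule helper3[OF M]) (use l1[of n] in \<open>simp add: linm_def diff_diff_eq\<close>)
next
  case (addR m n n')
  have M: "module sR" using R submod_module by blast
  show ?case unfolding fun_diff_def
    by (rule helper3[OF M]) (use l2[of m] in \<open>simp add: linm_def diff_diff_eq\<close>)
next
  case (smulL r m n)
  have M: "module sR" using R submod_module by blast
  show ?case unfolding fun_diff_def
    by (rule helper2[OF M]) (use l1[of n] in \<open>simp add: linm_def\<close>)
next
  case (smulR m r n)
  have M: "module sR" using R submod_module by blast
  show ?case unfolding fun_diff_def
    by (rule helper2[OF M]) (use l2[of m] in \<open>simp add: linm_def\<close>)
next
  case (add x y)
  have M: "module sR" using R submod_module by blast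
  have e: "(\<lambda>a. x a + y a) = x + y" by (simp add: fun_eq_iff)
  have f: "fin x" "fin y" using add by blast+
  have "lext sR (case_prod \<phi>) (x + y) = lext sR (case_prod \<phi>) x + lext sR (case_prod \<phi>) y"
    by (rule lext_add[OF M f])
  then show ?case unfolding e using add fin_add[OF f] submod_add[OF R] by metis
next
  case (scale x r)
  have M: "module sR" using R submod_module by blast
  then show ?case using scale by (simp add: fin_scale lext_scale[OF M] submod_scale[OF R])
qed

lemma teq2_ext:
  assumes R: "submod sR R"
    and l1: "\<And>n. linm sM sR R (\<lambda>m. \<phi> m n)" and l2: "\<And>m. linm sN sR R (\<phi> m)"
    and t: "teq2 sM sN xs ys"
  shows "(\<Sum>(a, b)\<leftarrow>xs. \<phi> a b) - (\<Sum>(a, b)\<leftarrow>ys. \<phi> a b) \<in> R"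
proof -
  have M: "module sR" using R submod_module by blast
  have "lext sR (case_prod \<phi>) (fsum xs - fsum ys) \<in> R"
    using tens2_rel_ext[OF R l1 l2] t unfolding teq2_def by blast
  then show ?thesis by (simp add: lext_diff[OF M fin_fsum fin_fsum] lext_fsum[OF M])
qed

lemma tens3_rel_ext:
  assumes R: "submod sR R"
    and l1: "\<And>n q. linm sM sR R (\<lambda>m. \<phi> m n q)" and l2: "\<And>m q. linm sN sR R (\<lambda>n. \<phi> m n q)"
    and l3: "\<And>m n. linm sP sR R (\<phi> m n)"
    and x: "x \<in> tens3_rel sM sN sP"
  shows "fin x \<and> lext sR (\<lambda>(m, n, q). \<phi> m n q) x \<in> R"
  using x
proof induction
  case zero then show ?case by (simp add: fin_zero fin_zero' lext_def submod_0[OF R])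
next
  case (add1 m m' n q)
  have M: "module sR" using R submod_module by blast
  show ?case unfolding fun_diff_def
    by (rule helper3[OF M]) (use l1[of n q] in \<open>simp add: linm_def diff_diff_eq\<close>)
next
  case (add2 m n n' q)
  have M: "module sR" using R submod_module by blast
  show ?case unfolding fun_diff_def
    by (rule helper3[OF M]) (use l2[of m q] in \<open>simp add: linm_def diff_diff_eq\<close>)
next
  case (add3 m n q q')
  have M: "module sR" using R submod_module by blast
  show ?case unfolding fun_diff_def
    by (rule helper3[OF M]) (use l3[of m n] in \<open>simp add: linm_def diff_diff_eq\<close>)
next
  case (smul1 r m n q)
  have M: "module sR" using R submod_module by blast
  show ?case unfolding fun_diff_def
    by (rule helper2[OF M]) (use l1[of n q] in \<open>simp add: linm_def\<close>)
next
  case (smul2 m r n q)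
  have M: "module sR" using R submod_module by blast
  show ?case unfolding fun_diff_def
    by (rule helper2[OF M]) (use l2[of m q] in \<open>simp add: linm_def\<close>)
next
  case (smul3 m n r q)
  have M: "module sR" using R submod_module by blast
  show ?case unfolding fun_diff_def
    by (rule helper2[OF M]) (use l3[of m n] in \<open>simp add: linm_def\<close>)
next
  case (add x y)
  have M: "module sR" using R submod_module by blast
  have e: "(\<lambda>a. x a + y a) = x + y" by (simp add: fun_eq_iff)
  have f: "fin x" "fin y" using add by blast+
  have "lext sR (\<lambda>p. case p of (m, n, q) \<Rightarrow> \<phi> m n q) (x + y) = lext sR (\<lambda>p. case p of (m, n, q) \<Rightarrow> \<phi> m n q) x + lext sR (\<lambda>p. case p of (m, n, q) \<Rightarrow> \<phi> m n q) y"
    by (rule lext_add[OF M f])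
  then show ?case unfolding e using add fin_add[OF f] submod_add[OF R] by metis
next
  case (scale x r)
  have M: "module sR" using R submod_module by blast
  then show ?case using scale by (simp add: fin_scale lext_scale[OF M] submod_scale[OF R])
qed

lemma teq3_ext:
  assumes R: "submod sR R"
    and l1: "\<And>n q. linm sM sR R (\<lambda>m. \<phi> m n q)" and l2: "\<And>m q. linm sN sR R (\<lambda>n. \<phi> m n q)"
    and l3: "\<And>m n. linm sP sR R (\<phi> m n)"
    and t: "teq3 sM sN sP xs ys"
  shows "(\<Sum>(a, b, c)\<leftarrow>xs. \<phi> a b c) - (\<Sum>(a, b, c)\<leftarrow>ys. \<phi> a b c) \<in> R"
proof -
  have M: "module sR" using R submod_module by blast
  have "lext sR (\<lambda>(m, n, q). \<phi> m n q) (fsum xs - fsum ys) \<in> R"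
    using tens3_rel_ext[OF R l1 l2 l3] t unfolding teq3_def by blast
  then show ?thesis by (simp add: lext_diff[OF M fin_fsum fin_fsum] lext_fsum[OF M])
qed

definition bilm :: "('k::comm_ring_1 \<Rightarrow> 'm::ab_group_add \<Rightarrow> 'm) \<Rightarrow> ('k \<Rightarrow> 'n::ab_group_add \<Rightarrow> 'n)
   \<Rightarrow> ('k \<Rightarrow> 'r::ab_group_add \<Rightarrow> 'r) \<Rightarrow> 'r set \<Rightarrow> ('m \<Rightarrow> 'n \<Rightarrow> 'r) \<Rightarrow> bool" where
  "bilm sM sN sR R \<phi> \<longleftrightarrow> (\<forall>n. linm sM sR R (\<lambda>m. \<phi> m n)) \<and> (\<forall>m. linm sN sR R (\<phi> m))"

definition trilm :: "('k::comm_ring_1 \<Rightarrow> 'm::ab_group_add \<Rightarrow> 'm) \<Rightarrow> ('k \<Rightarrow> 'n::ab_group_add \<Rightarrow> 'n)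
   \<Rightarrow> ('k \<Rightarrow> 'p::ab_group_add \<Rightarrow> 'p)
   \<Rightarrow> ('k \<Rightarrow> 'r::ab_group_add \<Rightarrow> 'r) \<Rightarrow> 'r set \<Rightarrow> ('m \<Rightarrow> 'n \<Rightarrow> 'p \<Rightarrow> 'r) \<Rightarrow> bool" where
  "trilm sM sN sP sR R \<phi> \<longleftrightarrow> (\<forall>n q. linm sM sR R (\<lambda>m. \<phi> m n q)) \<and> (\<forall>m q. linm sN sR R (\<lambda>n. \<phi> m n q))
     \<and> (\<forall>m n. linm sP sR R (\<phi> m n))"

definition lin :: "('k::comm_ring_1 \<Rightarrow> 'x::ab_group_add \<Rightarrow> 'x) \<Rightarrow> ('k \<Rightarrow> 'r::ab_group_add \<Rightarrow> 'r) \<Rightarrow> ('x \<Rightarrow> 'r) \<Rightarrow> bool" where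
  "lin sX sR f \<longleftrightarrow> (\<forall>x y. f (x + y) = f x + f y) \<and> (\<forall>c x. f (sX c x) = sR c (f x))"

lemma linm_zero_iff: "linm sX sR {0} f \<longleftrightarrow> lin sX sR f"
  by (simp add: linm_def lin_def)

lemma bilm_zero_iff: "bilm sM sN sR {0} \<phi> \<longleftrightarrow> (\<forall>n. lin sM sR (\<lambda>m. \<phi> m n)) \<and> (\<forall>m. lin sN sR (\<phi> m))"
  by (simp add: bilm_def linm_zero_iff)

lemma trilm_zero_iff: "trilm sM sN sP sR {0} \<phi> \<longleftrightarrow> (\<forall>n q. lin sM sR (\<lambda>m. \<phi> m n q)) \<and> (\<forall>m q. lin sN sR (\<lambda>n. \<phi> m n q))
     \<and> (\<forall>m n. lin sP sR (\<phi> m n))"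
  by (simp add: trilm_def linm_zero_iff)

definition sw :: "('h \<Rightarrow> ('h \<times> 'h) list) \<Rightarrow> 'h \<Rightarrow> ('h \<Rightarrow> 'h \<Rightarrow> 'r::ab_group_add) \<Rightarrow> 'r" where
  "sw \<Delta> h \<phi> = (\<Sum>(a, b)\<leftarrow>\<Delta> h. \<phi> a b)"

lemma sum_list_concat_map: "sum_list (concat (map f xs)) = sum_list (map (\<lambda>x. sum_list (f x)) xs)"
  by (induction xs) auto

lemma sum_D_right: "(\<Sum>(a, b, c)\<leftarrow>D_right \<Delta> \<Delta> h. \<phi> a b c) = sw \<Delta> h (\<lambda>a y. sw \<Delta> a (\<lambda>a1 a2. \<phi> a1 a2 y))"
  unfolding D_right_def sw_def sum_list_concat_map map_concat
  by (simp add: case_prod_beta' o_def)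

lemma sum_D_left: "(\<Sum>(a, b, c)\<leftarrow>D_left \<Delta> \<Delta> h. \<phi> a b c) = sw \<Delta> h (\<lambda>a y. sw \<Delta> y (\<lambda>y1 y2. \<phi> a y1 y2))"
  unfolding D_left_def sw_def sum_list_concat_map map_concat
  by (simp add: case_prod_beta' o_def)

lemma sum_tmult: "(\<Sum>(a, b)\<leftarrow>tmult xs ys. \<phi> a b) = (\<Sum>(a, b)\<leftarrow>xs. \<Sum>(c, d)\<leftarrow>ys. \<phi> (a * c) (b * d))"
  unfolding tmult_def sum_list_concat_map map_concat
  by (simp add: case_prod_beta' o_def)

lemma sw_cong: "submod sR R \<Longrightarrow> (\<And>a b. \<phi> a b - \<psi> a b \<in> R) \<Longrightarrow> sw \<Delta> h \<phi> - sw \<Delta> h \<psi> \<in> R"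
  unfolding sw_def using submod_sum_list[of sR R "\<Delta> h" "case_prod \<phi>" "case_prod \<psi>"]
  by (simp add: case_prod_beta')

lemma sw_scale: "module sR \<Longrightarrow> sR c (sw \<Delta> h \<phi>) = sw \<Delta> h (\<lambda>a b. sR c (\<phi> a b))"
  unfolding sw_def by (simp add: module_scale_sum_list case_prod_beta')

locale hopf =
  fixes sH :: "'k::comm_ring_1 \<Rightarrow> 'h::ring_1 \<Rightarrow> 'h"
    and \<Delta> :: "'h \<Rightarrow> ('h \<times> 'h) list" and \<epsilon> :: "'h \<Rightarrow> 'k" and S :: "'h \<Rightarrow> 'h"
  assumes hopf: "hopf_algebra sH \<Delta> \<epsilon> S"
begin

lemma kH: "k_algebra sH" using hopf by (simp add: hopf_algebra_def)
lemma modH: "module sH" using kH by (simp add: k_algebra_def)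
lemma D_add: "teq2 sH sH (\<Delta> (x + y)) (\<Delta> x @ \<Delta> y)" using hopf by (simp add: hopf_algebra_def)
lemma D_scale: "teq2 sH sH (\<Delta> (sH r x)) (map (\<lambda>(a, b). (sH r a, b)) (\<Delta> x))" using hopf by (simp add: hopf_algebra_def)
lemma eps_lin: "module_hom sH (*) \<epsilon>" using hopf by (simp add: hopf_algebra_def)
lemma S_lin: "module_hom sH sH S" using hopf by (simp add: hopf_algebra_def)
lemma coass: "teq3 sH sH sH (D_right \<Delta> \<Delta> h) (D_left \<Delta> \<Delta> h)" using hopf by (simp add: hopf_algebra_def)
lemma counitL: "(\<Sum>(a, b)\<leftarrow>\<Delta> h. sH (\<epsilon> a) b) = h" using hopf by (simp add: hopf_algebra_def)
lemma counitR: "(\<Sum>(a, b)\<leftarrow>\<Delta> h. sH (\<epsilon> b) a) = h" using hopf by (simp add: hopf_algebra_def)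
lemma D_mult: "teq2 sH sH (\<Delta> (x * y)) (tmult (\<Delta> x) (\<Delta> y))" using hopf by (simp add: hopf_algebra_def)
lemma D_one: "teq2 sH sH (\<Delta> 1) [(1, 1)]" using hopf by (simp add: hopf_algebra_def)
lemma eps_mult: "\<epsilon> (x * y) = \<epsilon> x * \<epsilon> y" using hopf by (simp add: hopf_algebra_def)
lemma eps_one: "\<epsilon> 1 = 1" using hopf by (simp add: hopf_algebra_def)
lemma antipL: "(\<Sum>(a, b)\<leftarrow>\<Delta> h. S a * b) = sH (\<epsilon> h) 1" using hopf by (simp add: hopf_algebra_def)
lemma antipR: "(\<Sum>(a, b)\<leftarrow>\<Delta> h. a * S b) = sH (\<epsilon> h) 1" using hopf by (simp add: hopf_algebra_def)

lemma sw_linm: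
  assumes R: "submod sR R" and \<phi>: "bilm sH sH sR R \<phi>"
  shows "linm sH sR R (\<lambda>h. sw \<Delta> h \<phi>)"
proof -
  have l1: "\<And>n. linm sH sR R (\<lambda>m. \<phi> m n)" and l2: "\<And>m. linm sH sR R (\<phi> m)"
    using \<phi> by (auto simp: bilm_def)
  have M: "module sR" using R submod_module by blast
  have A: "sw \<Delta> (x + y) \<phi> - (sw \<Delta> x \<phi> + sw \<Delta> y \<phi>) \<in> R" for x y
    using teq2_ext[OF R l1 l2 D_add[of x y]] by (simp add: sw_def)
  have B: "sw \<Delta> (sH c x) \<phi> - sR c (sw \<Delta> x \<phi>) \<in> R" for c x
  proof -
    have 1: "sw \<Delta> (sH c x) \<phi> - sw \<Delta> x (\<lambda>a b. \<phi> (sH c a) b) \<in> R"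
      using teq2_ext[OF R l1 l2 D_scale[of c x]]
      by (simp add: sw_def o_def case_prod_beta')
    have 2: "sw \<Delta> x (\<lambda>a b. \<phi> (sH c a) b) - sw \<Delta> x (\<lambda>a b. sR c (\<phi> a b)) \<in> R"
      by (rule sw_cong[OF R]) (use l1 in \<open>auto simp: linm_def\<close>)
    show ?thesis using submod_trans[OF R 1 2] by (simp add: sw_scale[OF M])
  qed
  show ?thesis using A B by (simp add: linm_def)
qed

lemma sw_coassoc:
  assumes R: "submod sR R" and \<phi>: "trilm sH sH sH sR R \<phi>"
  shows "sw \<Delta> h (\<lambda>a y. sw \<Delta> a (\<lambda>a1 a2. \<phi> a1 a2 y)) - sw \<Delta> h (\<lambda>a y. sw \<Delta> y (\<lambda>y1 y2. \<phi> a y1 y2)) \<in> R"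
proof -
  have l1: "\<And>n q. linm sH sR R (\<lambda>m. \<phi> m n q)" and l2: "\<And>m q. linm sH sR R (\<lambda>n. \<phi> m n q)"
    and l3: "\<And>m n. linm sH sR R (\<phi> m n)" using \<phi> by (auto simp: trilm_def)
  show ?thesis using teq3_ext[OF R l1 l2 l3 coass[of h]] by (simp add: sum_D_right sum_D_left)
qed

lemma sw_counitL:
  assumes R: "submod sR R" and \<psi>: "linm sH sR R \<psi>"
  shows "sw \<Delta> h (\<lambda>a b. sR (\<epsilon> a) (\<psi> b)) - \<psi> h \<in> R"
proof -
  have 1: "\<psi> h - sum_list (map (\<lambda>x. \<psi> (case x of (a, b) \<Rightarrow> sH (\<epsilon> a) b)) (\<Delta> h)) \<in> R"
    using linm_sum_list[OF \<psi> R, of "\<lambda>(a, b). sH (\<epsilon> a) b" "\<Delta> h"] counitL[of h] by simp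
  have 2: "sum_list (map (\<lambda>x. \<psi> (case x of (a, b) \<Rightarrow> sH (\<epsilon> a) b)) (\<Delta> h)) - sw \<Delta> h (\<lambda>a b. sR (\<epsilon> a) (\<psi> b)) \<in> R"
    unfolding sw_def by (rule submod_sum_list[OF R]) (use \<psi> in \<open>auto simp: linm_def\<close>)
  show ?thesis using submod_sym[OF R submod_trans[OF R 1 2]] .
qed

lemma sw_counitR:
  assumes R: "submod sR R" and \<psi>: "linm sH sR R \<psi>"
  shows "sw \<Delta> h (\<lambda>a b. sR (\<epsilon> b) (\<psi> a)) - \<psi> h \<in> R"
proof -
  have 1: "\<psi> h - sum_list (map (\<lambda>x. \<psi> (case x of (a, b) \<Rightarrow> sH (\<epsilon> b) a)) (\<Delta> h)) \<in> R"
    using linm_sum_list[OF \<psi> R, of "\<lambda>(a, b). sH (\<epsilon> b) a" "\<Delta> h"] counitR[of h] by simp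
  have 2: "sum_list (map (\<lambda>x. \<psi> (case x of (a, b) \<Rightarrow> sH (\<epsilon> b) a)) (\<Delta> h)) - sw \<Delta> h (\<lambda>a b. sR (\<epsilon> b) (\<psi> a)) \<in> R"
    unfolding sw_def by (rule submod_sum_list[OF R]) (use \<psi> in \<open>auto simp: linm_def\<close>)
  show ?thesis using submod_sym[OF R submod_trans[OF R 1 2]] .
qed

lemma sw_antipL:
  assumes R: "submod sR R" and \<psi>: "linm sH sR R \<psi>"
  shows "sw \<Delta> h (\<lambda>a b. \<psi> (S a * b)) - sR (\<epsilon> h) (\<psi> 1) \<in> R"
proof -
  have 1: "\<psi> (sH (\<epsilon> h) 1) - sum_list (map (\<lambda>x. \<psi> (case x of (a, b) \<Rightarrow> S a * b)) (\<Delta> h)) \<in> R"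
    using linm_sum_list[OF \<psi> R, of "\<lambda>(a, b). S a * b" "\<Delta> h"] antipL[of h] by simp
  have 2: "\<psi> (sH (\<epsilon> h) 1) - sR (\<epsilon> h) (\<psi> 1) \<in> R" using \<psi> by (simp add: linm_def)
  show ?thesis using submod_trans[OF R submod_sym[OF R 1] 2] by (simp add: sw_def case_prod_beta')
qed

lemma sw_antipR:
  assumes R: "submod sR R" and \<psi>: "linm sH sR R \<psi>"
  shows "sw \<Delta> h (\<lambda>a b. \<psi> (a * S b)) - sR (\<epsilon> h) (\<psi> 1) \<in> R"
proof -
  have 1: "\<psi> (sH (\<epsilon> h) 1) - sum_list (map (\<lambda>x. \<psi> (case x of (a, b) \<Rightarrow> a * S b)) (\<Delta> h)) \<in> R"
    using linm_sum_list[OF \<psi> R, of "\<lambda>(a, b). a * S b" "\<Delta> h"] antipR[of h] by simp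
  have 2: "\<psi> (sH (\<epsilon> h) 1) - sR (\<epsilon> h) (\<psi> 1) \<in> R" using \<psi> by (simp add: linm_def)
  show ?thesis using submod_trans[OF R submod_sym[OF R 1] 2] by (simp add: sw_def case_prod_beta')
qed

lemma sw_mult:
  assumes R: "submod sR R" and \<phi>: "bilm sH sH sR R \<phi>"
  shows "sw \<Delta> (x * y) \<phi> - sw \<Delta> x (\<lambda>a b. sw \<Delta> y (\<lambda>c d. \<phi> (a * c) (b * d))) \<in> R"
proof -
  have l1: "\<And>n. linm sH sR R (\<lambda>m. \<phi> m n)" and l2: "\<And>m. linm sH sR R (\<phi> m)"
    using \<phi> by (auto simp: bilm_def)
  show ?thesis using teq2_ext[OF R l1 l2 D_mult[of x y]] by (simp add: sw_def sum_tmult)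
qed

lemma sw_one:
  assumes R: "submod sR R" and \<phi>: "bilm sH sH sR R \<phi>"
  shows "sw \<Delta> 1 \<phi> - \<phi> 1 1 \<in> R"
proof -
  have l1: "\<And>n. linm sH sR R (\<lambda>m. \<phi> m n)" and l2: "\<And>m. linm sH sR R (\<phi> m)"
    using \<phi> by (auto simp: bilm_def)
  show ?thesis using teq2_ext[OF R l1 l2 D_one] by (simp add: sw_def)
qed

end

locale cchopf = hopf +
  assumes cocomm: "cocommutative sH \<Delta>"
begin

lemma sw_cocomm:
  assumes R: "submod sR R" and \<phi>: "bilm sH sH sR R \<phi>"
  shows "sw \<Delta> h \<phi> - sw \<Delta> h (\<lambda>a b. \<phi> b a) \<in> R"
proof -
  have l1: "\<And>n. linm sH sR R (\<lambda>m. \<phi> m n)" and l2: "\<And>m. linm sH sR R (\<phi> m)"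
    using \<phi> by (auto simp: bilm_def)
  have "teq2 sH sH (map prod.swap (\<Delta> h)) (\<Delta> h)" using cocomm by (simp add: cocommutative_def)
  from teq2_ext[OF R l1 l2 this] show ?thesis
    by (simp add: sw_def o_def case_prod_beta')
    (use submod_sym[OF R] in blast)
qed

end

named_theorems linI

lemma lin_id[linI]: "lin sX sX (\<lambda>x. x)" by (simp add: lin_def)
lemma lin_add[linI]: "module sR \<Longrightarrow> lin sX sR f \<Longrightarrow> lin sX sR g \<Longrightarrow> lin sX sR (\<lambda>x. f x + g x)"
  by (simp add: lin_def module.scale_right_distrib)
lemma lin_zero[linI]: "module sR \<Longrightarrow> lin sX sR (\<lambda>x. 0)"
  by (simp add: lin_def module.scale_zero_right)
lemma lin_scale[linI]: "module sR \<Longrightarrow> lin sX sR f \<Longrightarrow> lin sX sR (\<lambda>x. sR c (f x))"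
  by (simp add: lin_def module.scale_right_distrib module.scale_left_commute)
lemma lin_scal[linI]: "lin sX (*) e \<Longrightarrow> module sR \<Longrightarrow> lin sX sR (\<lambda>x. sR (e x) c)"
  by (simp add: lin_def module.scale_left_distrib module.scale_scale)
lemma lin_multL[linI]: "k_algebra sR \<Longrightarrow> lin sX sR f \<Longrightarrow> lin sX sR (\<lambda>x. f x * c)"
  by (simp add: lin_def k_algebra_def distrib_right)
lemma lin_multR[linI]: "k_algebra sR \<Longrightarrow> lin sX sR f \<Longrightarrow> lin sX sR (\<lambda>x. c * f x)"
  unfolding lin_def k_algebra_def by (metis distrib_left)
lemma lin_sw[linI]: "module sR \<Longrightarrow> (\<And>a b. lin sX sR (\<lambda>x. F x a b)) \<Longrightarrow> lin sX sR (\<lambda>x. sw \<Delta> h (F x))"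
proof -
  assume M: "module sR" and F: "\<And>a b. lin sX sR (\<lambda>x. F x a b)"
  show ?thesis unfolding lin_def sw_def
  proof (intro conjI allI)
    fix x y show "(\<Sum>(a, b)\<leftarrow>\<Delta> h. F (x + y) a b) = (\<Sum>(a, b)\<leftarrow>\<Delta> h. F x a b) + (\<Sum>(a, b)\<leftarrow>\<Delta> h. F y a b)"
    proof -
      have "\<And>a b. F (x + y) a b = F x a b + F y a b" using F by (simp add: lin_def)
      then show ?thesis by (simp add: sum_list_addf case_prod_beta')
    qed
  next
    fix c x show "(\<Sum>(a, b)\<leftarrow>\<Delta> h. F (sX c x) a b) = sR c (\<Sum>(a, b)\<leftarrow>\<Delta> h. F x a b)"
      using F by (simp add: module_scale_sum_list[OF M] lin_def case_prod_beta')
  qed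
qed
lemma lin_sum_list[linI]: "module sR \<Longrightarrow> (\<And>i. lin sX sR (\<lambda>x. F x i)) \<Longrightarrow> lin sX sR (\<lambda>x. \<Sum>i\<leftarrow>L. F x i)"
proof -
  assume M: "module sR" and F: "\<And>i. lin sX sR (\<lambda>x. F x i)"
  show ?thesis unfolding lin_def
  proof (intro conjI allI)
    fix x y show "(\<Sum>i\<leftarrow>L. F (x + y) i) = (\<Sum>i\<leftarrow>L. F x i) + (\<Sum>i\<leftarrow>L. F y i)"
    proof -
      have "\<And>i. F (x + y) i = F x i + F y i" using F by (simp add: lin_def)
      then show ?thesis by (simp add: sum_list_addf)
    qed
  next
    fix c x show "(\<Sum>i\<leftarrow>L. F (sX c x) i) = sR c (\<Sum>i\<leftarrow>L. F x i)"
      using F by (simp add: module_scale_sum_list[OF M] lin_def)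
  qed
qed
lemma lin_comp: "lin sY sR f \<Longrightarrow> lin sX sY g \<Longrightarrow> lin sX sR (\<lambda>x. f (g x))"
  by (simp add: lin_def)
lemma lin_of_hom: "module_hom s1 s2 f \<Longrightarrow> lin s1 s2 f"
  by (simp add: lin_def module_hom_iff)
lemma lin_hom_comp: "module_hom sY sR f \<Longrightarrow> lin sX sY g \<Longrightarrow> lin sX sR (\<lambda>x. f (g x))"
  by (simp add: lin_def module_hom_iff)

lemma lin_sw_fun: "module sR \<Longrightarrow> (\<And>n. lin sH sR (\<lambda>m. \<phi> m n)) \<Longrightarrow> (\<And>m. lin sH sR (\<phi> m)) \<Longrightarrow> hopf sH \<Delta> \<epsilon> S
   \<Longrightarrow> lin sH sR (\<lambda>h. sw \<Delta> h \<phi>)"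
  using hopf.sw_linm[of sH \<Delta> \<epsilon> S sR "{0}" \<phi>] submod_zero[of sR]
  by (simp add: bilm_zero_iff linm_zero_iff)

named_theorems linmI

lemma linm_lin: "submod sR R \<Longrightarrow> lin sX sR f \<Longrightarrow> linm sX sR R f"
  by (simp add: linm_def lin_def submod_0)
lemma linm_comp: "linm sY sR R f \<Longrightarrow> lin sX sY g \<Longrightarrow> linm sX sR R (\<lambda>x. f (g x))"
  by (simp add: linm_def lin_def)
lemma linm_scale[linmI]: "submod sR R \<Longrightarrow> linm sX sR R f \<Longrightarrow> linm sX sR R (\<lambda>x. sR c (f x))"
proof -
  assume R: "submod sR R" and f: "linm sX sR R f"
  have M: "module sR" using R submod_module by blast
  show ?thesis unfolding linm_def
  proof (intro conjI allI)
    fix x y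
    have "sR c (f (x + y)) - sR c (f x + f y) \<in> R"
      using f submod_scale2[OF R] by (simp add: linm_def)
    then show "sR c (f (x + y)) - (sR c (f x) + sR c (f y)) \<in> R" by (simp add: module.scale_right_distrib[OF M])
  next
    fix d x
    have "sR c (f (sX d x)) - sR c (sR d (f x)) \<in> R"
      using f submod_scale2[OF R] by (simp add: linm_def)
    then show "sR c (f (sX d x)) - sR d (sR c (f x)) \<in> R" by (simp add: module.scale_left_commute[OF M])
  qed
qed
lemma linm_add[linmI]: "submod sR R \<Longrightarrow> linm sX sR R f \<Longrightarrow> linm sX sR R g \<Longrightarrow> linm sX sR R (\<lambda>x. f x + g x)"
proof -
  assume R: "submod sR R" and f: "linm sX sR R f" and g: "linm sX sR R g"
  have M: "module sR" using R submod_module by blast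
  show ?thesis unfolding linm_def
  proof (intro conjI allI)
    fix x y
    have "(f (x + y) + g (x + y)) - ((f x + f y) + (g x + g y)) \<in> R"
      using f g submod_add2[OF R] by (simp add: linm_def)
    then show "f (x + y) + g (x + y) - (f x + g x + (f y + g y)) \<in> R" by (simp add: algebra_simps)
  next
    fix d x
    have "(f (sX d x) + g (sX d x)) - (sR d (f x) + sR d (g x)) \<in> R"
      using f g submod_add2[OF R] by (simp add: linm_def)
    then show "f (sX d x) + g (sX d x) - sR d (f x + g x) \<in> R" by (simp add: module.scale_right_distrib[OF M])
  qed
qed
lemma linm_sw[linmI]: "submod sR R \<Longrightarrow> (\<And>a b. linm sX sR R (\<lambda>x. F x a b)) \<Longrightarrow> linm sX sR R (\<lambda>x. sw \<Delta> h (F x))"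
proof -
  assume R: "submod sR R" and F: "\<And>a b. linm sX sR R (\<lambda>x. F x a b)"
  have M: "module sR" using R submod_module by blast
  show ?thesis unfolding linm_def
  proof (intro conjI allI)
    fix x y
    have "sw \<Delta> h (F (x + y)) - sw \<Delta> h (\<lambda>a b. F x a b + F y a b) \<in> R"
      by (rule sw_cong[OF R]) (use F in \<open>simp add: linm_def\<close>)
    moreover have "sw \<Delta> h (\<lambda>a b. F x a b + F y a b) = sw \<Delta> h (F x) + sw \<Delta> h (F y)"
      unfolding sw_def by (simp add: sum_list_addf case_prod_beta')
    ultimately show "sw \<Delta> h (F (x + y)) - (sw \<Delta> h (F x) + sw \<Delta> h (F y)) \<in> R" by simp
  next
    fix d x
    have "sw \<Delta> h (F (sX d x)) - sw \<Delta> h (\<lambda>a b. sR d (F x a b)) \<in> R"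
      by (rule sw_cong[OF R]) (use F in \<open>simp add: linm_def\<close>)
    then show "sw \<Delta> h (F (sX d x)) - sR d (sw \<Delta> h (F x)) \<in> R" by (simp add: sw_scale[OF M])
  qed
qed

lemma bilmI: "(\<And>n. linm sM sR R (\<lambda>m. \<phi> m n)) \<Longrightarrow> (\<And>m. linm sN sR R (\<phi> m)) \<Longrightarrow> bilm sM sN sR R \<phi>"
  by (simp add: bilm_def)
lemma trilmI: "(\<And>n q. linm sM sR R (\<lambda>m. \<phi> m n q)) \<Longrightarrow> (\<And>m q. linm sN sR R (\<lambda>n. \<phi> m n q))
     \<Longrightarrow> (\<And>m n. linm sP sR R (\<phi> m n)) \<Longrightarrow> trilm sM sN sP sR R \<phi>"
  by (simp add: trilm_def)

lemma sum_list_swap: "(\<Sum>x\<leftarrow>xs. \<Sum>y\<leftarrow>ys. F x y) = (\<Sum>y\<leftarrow>ys. \<Sum>x\<leftarrow>xs. (F x y::'a::comm_monoid_add))"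
proof (induction xs)
  case (Cons a xs)
  have "(\<Sum>y\<leftarrow>ys. F a y + (\<Sum>x\<leftarrow>xs. F x y)) = (\<Sum>y\<leftarrow>ys. F a y) + (\<Sum>y\<leftarrow>ys. \<Sum>x\<leftarrow>xs. F x y)"
    by (rule sum_list_addf)
  then show ?case using Cons by simp
qed simp

lemma sw_swap: "sw \<Delta> x (\<lambda>a b. sw \<Delta> y (\<lambda>c d. F a b c d)) = sw \<Delta> y (\<lambda>c d. sw \<Delta> x (\<lambda>a b. F a b c d))"
proof -
  have "(\<Sum>p\<leftarrow>\<Delta> x. \<Sum>q\<leftarrow>\<Delta> y. (\<lambda>p q. case p of (a, b) \<Rightarrow> case q of (c, d) \<Rightarrow> F a b c d) p q)
     = (\<Sum>q\<leftarrow>\<Delta> y. \<Sum>p\<leftarrow>\<Delta> x. (\<lambda>p q. case p of (a, b) \<Rightarrow> case q of (c, d) \<Rightarrow> F a b c d) p q)"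
    by (rule sum_list_swap)
  then show ?thesis unfolding sw_def by (simp add: case_prod_beta')
qed

lemma sw_multc: "sw \<Delta> h \<phi> * c = sw \<Delta> h (\<lambda>a b. \<phi> a b * (c::'a::ring_1))"
  unfolding sw_def by (simp add: sum_list_mult_const case_prod_beta' o_def)
lemma sw_cmult: "c * sw \<Delta> h \<phi> = sw \<Delta> h (\<lambda>a b. (c::'a::ring_1) * \<phi> a b)"
  unfolding sw_def by (simp add: sum_list_const_mult case_prod_beta' o_def)
lemma sw_cong_eq: "(\<And>a b. \<phi> a b = \<psi> a b) \<Longrightarrow> sw \<Delta> h \<phi> = sw \<Delta> h \<psi>"
  by (simp add: sw_def)
lemma sw_add: "sw \<Delta> h (\<lambda>a b. \<phi> a b + \<psi> a b) = sw \<Delta> h \<phi> + sw \<Delta> h \<psi>"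
  by (simp add: sw_def sum_list_addf case_prod_beta')

lemma k_algebra_k: "k_algebra ((*) :: 'k::comm_ring_1 \<Rightarrow> 'k \<Rightarrow> 'k)"
  by (simp add: k_algebra_def module_def algebra_simps)
lemma module_k: "module ((*) :: 'k::comm_ring_1 \<Rightarrow> 'k \<Rightarrow> 'k)"
  by (simp add: module_def algebra_simps)
lemma k_algebra_module: "k_algebra s \<Longrightarrow> module s" by (simp add: k_algebra_def)
lemma k_alg_scale_mult1: "k_algebra s \<Longrightarrow> s r 1 * x = s r x"
  by (metis k_algebra_def mult_1)
lemma k_alg_scale_mult2: "k_algebra s \<Longrightarrow> x * s r 1 = s r x"
  by (metis k_algebra_def mult_1_right)
lemma k_alg_scaleL: "k_algebra s \<Longrightarrow> s r x * y = s r (x * y)"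
  by (simp add: k_algebra_def)
lemma k_alg_scaleR: "k_algebra s \<Longrightarrow> x * s r y = s r (x * y)"
  by (metis k_algebra_def)

context hopf begin

lemma lin_S[linI]: "lin sX sH g \<Longrightarrow> lin sX sH (\<lambda>x. S (g x))"
  by (rule lin_hom_comp[OF S_lin])
lemma lin_eps[linI]: "lin sX sH g \<Longrightarrow> lin sX (*) (\<lambda>x. \<epsilon> (g x))"
  by (rule lin_hom_comp[OF eps_lin])
lemma lin_sw_arg[linI]: "module sR \<Longrightarrow> (\<And>n. lin sH sR (\<lambda>m. \<phi> m n)) \<Longrightarrow> (\<And>m. lin sH sR (\<phi> m)) \<Longrightarrow> lin sX sH g
   \<Longrightarrow> lin sX sR (\<lambda>x. sw \<Delta> (g x) \<phi>)"
proof -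
  assume a: "module sR" "\<And>n. lin sH sR (\<lambda>m. \<phi> m n)" "\<And>m. lin sH sR (\<phi> m)" "lin sX sH g"
  have "lin sH sR (\<lambda>h. sw \<Delta> h \<phi>)" by (rule lin_sw_fun) (use a hopf_axioms in auto)
  from lin_comp[OF this a(4)] show ?thesis .
qed

lemmas basicI = kH modH k_algebra_k module_k

lemma sw_coassoc_eq:
  assumes "module sR" "\<And>b c. lin sH sR (\<lambda>a. \<phi> a b c)" "\<And>a c. lin sH sR (\<lambda>b. \<phi> a b c)" "\<And>a b. lin sH sR (\<phi> a b)"
  shows "sw \<Delta> h (\<lambda>a y. sw \<Delta> a (\<lambda>a1 a2. \<phi> a1 a2 y)) = sw \<Delta> h (\<lambda>a y. sw \<Delta> y (\<lambda>y1 y2. \<phi> a y1 y2))"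
  using sw_coassoc[OF submod_zero[OF assms(1)], of \<phi> h] assms by (simp add: trilm_zero_iff)

lemma sw_counitL_eq: "module sR \<Longrightarrow> lin sH sR \<psi> \<Longrightarrow> sw \<Delta> h (\<lambda>a b. sR (\<epsilon> a) (\<psi> b)) = \<psi> h"
  using sw_counitL[OF submod_zero, of sR \<psi> h] by (simp add: linm_zero_iff)
lemma sw_counitR_eq: "module sR \<Longrightarrow> lin sH sR \<psi> \<Longrightarrow> sw \<Delta> h (\<lambda>a b. sR (\<epsilon> b) (\<psi> a)) = \<psi> h"
  using sw_counitR[OF submod_zero, of sR \<psi> h] by (simp add: linm_zero_iff)
lemma sw_antipL_eq: "module sR \<Longrightarrow> lin sH sR \<psi> \<Longrightarrow> sw \<Delta> h (\<lambda>a b. \<psi> (S a * b)) = sR (\<epsilon> h) (\<psi> 1)"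
  using sw_antipL[OF submod_zero, of sR \<psi> h] by (simp add: linm_zero_iff)
lemma sw_antipR_eq: "module sR \<Longrightarrow> lin sH sR \<psi> \<Longrightarrow> sw \<Delta> h (\<lambda>a b. \<psi> (a * S b)) = sR (\<epsilon> h) (\<psi> 1)"
  using sw_antipR[OF submod_zero, of sR \<psi> h] by (simp add: linm_zero_iff)
lemma sw_mult_eq: "module sR \<Longrightarrow> (\<And>n. lin sH sR (\<lambda>m. \<phi> m n)) \<Longrightarrow> (\<And>m. lin sH sR (\<phi> m)) \<Longrightarrow>
   sw \<Delta> (x * y) \<phi> = sw \<Delta> x (\<lambda>a b. sw \<Delta> y (\<lambda>c d. \<phi> (a * c) (b * d)))"
  using sw_mult[OF submod_zero, of sR \<phi> x y] by (simp add: bilm_zero_iff)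
lemma sw_one_eq: "module sR \<Longrightarrow> (\<And>n. lin sH sR (\<lambda>m. \<phi> m n)) \<Longrightarrow> (\<And>m. lin sH sR (\<phi> m)) \<Longrightarrow>
   sw \<Delta> 1 \<phi> = \<phi> 1 1"
  using sw_one[OF submod_zero, of sR \<phi>] by (simp add: bilm_zero_iff)

lemma eps_S: "\<epsilon> (S h) = \<epsilon> h"
proof -
  have "\<epsilon> (S h) = sw \<Delta> h (\<lambda>a b. \<epsilon> b * \<epsilon> (S a))"
    by (rule sw_counitR_eq[symmetric]) (auto intro!: linI basicI)
  also have "\<dots> = sw \<Delta> h (\<lambda>a b. \<epsilon> (S a * b))"
    by (rule sw_cong_eq) (simp add: eps_mult mult.commute)
  also have "\<dots> = \<epsilon> h * \<epsilon> 1"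
    by (rule sw_antipL_eq) (auto intro!: linI basicI)
  finally show ?thesis by (simp add: eps_one)
qed

lemma S_one: "S 1 = 1"
proof -
  have "sw \<Delta> 1 (\<lambda>a b. S a * b) = S 1 * 1"
    by (rule sw_one_eq) (auto intro!: linI basicI)
  moreover have "sw \<Delta> 1 (\<lambda>a b. S a * b) = sH (\<epsilon> 1) 1" using antipL[of 1] by (simp add: sw_def)
  ultimately show ?thesis by (simp add: eps_one module.scale_one[OF modH])
qed

lemma S_mult: "S (x * y) = S y * S x"
proof -
  have key: "sH (\<epsilon> x1 * \<epsilon> y1) z = sw \<Delta> x1 (\<lambda>a b. sw \<Delta> y1 (\<lambda>c d. S (a * c) * (b * d) * z))" for x1 y1 z
  proof -
    have "sH (\<epsilon> x1 * \<epsilon> y1) 1 = sw \<Delta> (x1 * y1) (\<lambda>a b. S a * b)"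
      using antipL[of "x1 * y1"] by (simp add: sw_def eps_mult)
    also have "\<dots> = sw \<Delta> x1 (\<lambda>a b. sw \<Delta> y1 (\<lambda>c d. S (a * c) * (b * d)))"
      by (rule sw_mult_eq) (auto intro!: linI basicI)
    finally have "sH (\<epsilon> x1 * \<epsilon> y1) 1 * z = sw \<Delta> x1 (\<lambda>a b. sw \<Delta> y1 (\<lambda>c d. S (a * c) * (b * d) * z))"
      by (simp add: sw_multc)
    then show ?thesis by (simp add: k_alg_scale_mult1[OF kH])
  qed
  have inner: "sw \<Delta> y (\<lambda>y1 y2. sw \<Delta> y1 (\<lambda>c d. S (a * c) * (b * d) * (S y2 * S x2))) = S (a * y) * b * S x2" for a b x2
  proof -
    have "sw \<Delta> y (\<lambda>y1 y2. sw \<Delta> y1 (\<lambda>c d. S (a * c) * (b * d) * (S y2 * S x2)))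
        = sw \<Delta> y (\<lambda>c z. sw \<Delta> z (\<lambda>d y2. S (a * c) * (b * d) * (S y2 * S x2)))"
      by (rule sw_coassoc_eq) (auto intro!: linI basicI)
    also have "\<dots> = sw \<Delta> y (\<lambda>c z. sw \<Delta> z (\<lambda>d y2. S (a * c) * b * (d * S y2) * S x2))"
      by (intro sw_cong_eq) (simp add: mult.assoc)
    also have "\<dots> = sw \<Delta> y (\<lambda>c z. sH (\<epsilon> z) (S (a * c) * b * 1 * S x2))"
    proof (rule sw_cong_eq)
      fix c z show "sw \<Delta> z (\<lambda>d y2. S (a * c) * b * (d * S y2) * S x2) = sH (\<epsilon> z) (S (a * c) * b * 1 * S x2)"
        by (rule sw_antipR_eq[where sR=sH and \<psi>="\<lambda>u. S (a * c) * b * u * S x2"]) (auto intro!: linI basicI)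
    qed
    also have "\<dots> = S (a * y) * b * S x2"
      by (simp, rule sw_counitR_eq[where sR=sH]) (auto intro!: linI basicI)
    finally show ?thesis .
  qed
  have "S y * S x = sw \<Delta> x (\<lambda>a b. sH (\<epsilon> a) (S y * S b))"
    by (rule sw_counitL_eq[symmetric]) (auto intro!: linI basicI)
  also have "\<dots> = sw \<Delta> x (\<lambda>x1 x2. sH (\<epsilon> x1) (sw \<Delta> y (\<lambda>y1 y2. sH (\<epsilon> y1) (S y2 * S x2))))"
  proof (rule sw_cong_eq)
    fix a b show "sH (\<epsilon> a) (S y * S b) = sH (\<epsilon> a) (sw \<Delta> y (\<lambda>y1 y2. sH (\<epsilon> y1) (S y2 * S b)))"
      by (subst sw_counitL_eq) (auto intro!: linI basicI)
  qed
  also have "\<dots> = sw \<Delta> x (\<lambda>x1 x2. sw \<Delta> y (\<lambda>y1 y2. sw \<Delta> x1 (\<lambda>a b. sw \<Delta> y1 (\<lambda>c d. S (a * c) * (b * d) * (S y2 * S x2)))))"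
    by (intro sw_cong_eq) (simp add: sw_scale[OF modH] module.scale_scale[OF modH] key)
  also have "\<dots> = sw \<Delta> x (\<lambda>x1 x2. sw \<Delta> x1 (\<lambda>a b. sw \<Delta> y (\<lambda>y1 y2. sw \<Delta> y1 (\<lambda>c d. S (a * c) * (b * d) * (S y2 * S x2)))))"
    by (intro sw_cong_eq sw_swap)
  also have "\<dots> = sw \<Delta> x (\<lambda>a w. sw \<Delta> w (\<lambda>b x2. sw \<Delta> y (\<lambda>y1 y2. sw \<Delta> y1 (\<lambda>c d. S (a * c) * (b * d) * (S y2 * S x2)))))"
    by (rule sw_coassoc_eq) (auto intro!: linI basicI)
  also have "\<dots> = sw \<Delta> x (\<lambda>a w. sw \<Delta> w (\<lambda>b x2. S (a * y) * b * S x2))"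
    by (simp add: inner)
  also have "\<dots> = sw \<Delta> x (\<lambda>a w. sH (\<epsilon> w) (S (a * y) * 1))"
  proof (rule sw_cong_eq)
    fix a w
    have "sw \<Delta> w (\<lambda>b x2. S (a * y) * b * S x2) = sw \<Delta> w (\<lambda>b x2. S (a * y) * (b * S x2))"
      by (simp add: mult.assoc)
    also have "\<dots> = sH (\<epsilon> w) (S (a * y) * 1)"
      by (rule sw_antipR_eq[where sR=sH and \<psi>="\<lambda>u. S (a * y) * u"]) (auto intro!: linI basicI)
    finally show "sw \<Delta> w (\<lambda>b x2. S (a * y) * b * S x2) = sH (\<epsilon> w) (S (a * y) * 1)" .
  qed
  also have "\<dots> = S (x * y)"
    by (simp, rule sw_counitR_eq[where sR=sH]) (auto intro!: linI basicI)
  finally show ?thesis ..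
qed

end

definition eqm :: "'r::ab_group_add set \<Rightarrow> 'r \<Rightarrow> 'r \<Rightarrow> bool" where
  "eqm R a b \<longleftrightarrow> a - b \<in> R"

lemma eqm_trans: "submod sR R \<Longrightarrow> eqm R a b \<Longrightarrow> eqm R b c \<Longrightarrow> eqm R a c"
  unfolding eqm_def by (rule submod_trans)
lemma eqm_sym: "submod sR R \<Longrightarrow> eqm R a b \<Longrightarrow> eqm R b a"
  unfolding eqm_def by (rule submod_sym)
lemma eqm_refl: "submod sR R \<Longrightarrow> eqm R a a"
  unfolding eqm_def by (rule submod_refl)
lemma eqm_sw: "submod sR R \<Longrightarrow> (\<And>a b. eqm R (\<phi> a b) (\<psi> a b)) \<Longrightarrow> eqm R (sw \<Delta> h \<phi>) (sw \<Delta> h \<psi>)"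
  unfolding eqm_def by (rule sw_cong)
lemma eqm_scale: "submod sR R \<Longrightarrow> eqm R a b \<Longrightarrow> eqm R (sR c a) (sR c b)"
  unfolding eqm_def by (rule submod_scale2)
lemma eqm_zero: "eqm {0} a b \<longleftrightarrow> a = b"
  by (simp add: eqm_def)

lemma bilm_lin1: "bilm sM sN sR R \<phi> \<Longrightarrow> lin sX sM g \<Longrightarrow> linm sX sR R (\<lambda>x. \<phi> (g x) c)"
  unfolding bilm_def using linm_comp by blast
lemma bilm_lin2: "bilm sM sN sR R \<phi> \<Longrightarrow> lin sX sN g \<Longrightarrow> linm sX sR R (\<lambda>x. \<phi> c (g x))"
  unfolding bilm_def using linm_comp by blast

context hopf begin

lemma linm_sw_arg[linmI]: "submod sR R \<Longrightarrow> bilm sH sH sR R \<phi> \<Longrightarrow> lin sX sH g \<Longrightarrow> linm sX sR R (\<lambda>x. sw \<Delta> (g x) \<phi>)"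
  using linm_comp sw_linm by blast

lemma eqm_coassoc: "submod sR R \<Longrightarrow> trilm sH sH sH sR R \<phi> \<Longrightarrow>
  eqm R (sw \<Delta> h (\<lambda>a y. sw \<Delta> a (\<lambda>a1 a2. \<phi> a1 a2 y))) (sw \<Delta> h (\<lambda>a y. sw \<Delta> y (\<lambda>y1 y2. \<phi> a y1 y2)))"
  unfolding eqm_def by (rule sw_coassoc)
lemma eqm_counitL: "submod sR R \<Longrightarrow> linm sH sR R \<psi> \<Longrightarrow> eqm R (sw \<Delta> h (\<lambda>a b. sR (\<epsilon> a) (\<psi> b))) (\<psi> h)"
  unfolding eqm_def by (rule sw_counitL)
lemma eqm_counitR: "submod sR R \<Longrightarrow> linm sH sR R \<psi> \<Longrightarrow> eqm R (sw \<Delta> h (\<lambda>a b. sR (\<epsilon> b) (\<psi> a))) (\<psi> h)"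
  unfolding eqm_def by (rule sw_counitR)
lemma eqm_antipL: "submod sR R \<Longrightarrow> linm sH sR R \<psi> \<Longrightarrow> eqm R (sw \<Delta> h (\<lambda>a b. \<psi> (S a * b))) (sR (\<epsilon> h) (\<psi> 1))"
  unfolding eqm_def by (rule sw_antipL)
lemma eqm_antipR: "submod sR R \<Longrightarrow> linm sH sR R \<psi> \<Longrightarrow> eqm R (sw \<Delta> h (\<lambda>a b. \<psi> (a * S b))) (sR (\<epsilon> h) (\<psi> 1))"
  unfolding eqm_def by (rule sw_antipR)
lemma eqm_mult: "submod sR R \<Longrightarrow> bilm sH sH sR R \<phi> \<Longrightarrow>
  eqm R (sw \<Delta> (x * y) \<phi>) (sw \<Delta> x (\<lambda>a b. sw \<Delta> y (\<lambda>c d. \<phi> (a * c) (b * d))))"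
  unfolding eqm_def by (rule sw_mult)
lemma eqm_one: "submod sR R \<Longrightarrow> bilm sH sH sR R \<phi> \<Longrightarrow> eqm R (sw \<Delta> 1 \<phi>) (\<phi> 1 1)"
  unfolding eqm_def by (rule sw_one)

lemma E1:
  assumes R: "submod sR R" and \<Phi>: "bilm sH sH sR R \<Phi>"
  shows "eqm R (sw \<Delta> x (\<lambda>g z. sw \<Delta> g (\<lambda>c d. sw \<Delta> z (\<lambda>e f. \<Phi> (c * S f) (d * S e))))) (sR (\<epsilon> x) (\<Phi> 1 1))"
proof -
  note tr[trans] = eqm_trans[OF R]
  note l1 = bilm_lin1[OF \<Phi>] and l2 = bilm_lin2[OF \<Phi>]
  have "eqm R (sw \<Delta> x (\<lambda>g z. sw \<Delta> g (\<lambda>c d. sw \<Delta> z (\<lambda>e f. \<Phi> (c * S f) (d * S e)))))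
     (sw \<Delta> x (\<lambda>c y. sw \<Delta> y (\<lambda>d z. sw \<Delta> z (\<lambda>e f. \<Phi> (c * S f) (d * S e)))))"
    by (rule eqm_coassoc[OF R]) (intro trilmI bilmI linmI R l1 l2 linI basicI)+
  also have "eqm R \<dots> (sw \<Delta> x (\<lambda>c y. sw \<Delta> y (\<lambda>w f. sw \<Delta> w (\<lambda>d e. \<Phi> (c * S f) (d * S e)))))"
    by (rule eqm_sw[OF R], rule eqm_sym[OF R], rule eqm_coassoc[OF R]) (intro trilmI bilmI linmI R l1 l2 linI basicI)+
  also have "eqm R \<dots> (sw \<Delta> x (\<lambda>c y. sw \<Delta> y (\<lambda>w f. sR (\<epsilon> w) (\<Phi> (c * S f) 1))))"
    by (rule eqm_sw[OF R], rule eqm_sw[OF R], rule eqm_antipR[OF R, where \<psi>="\<lambda>u. \<Phi> _ u", simplified]) (intro linmI R l1 l2 linI basicI)+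
  also have "eqm R \<dots> (sw \<Delta> x (\<lambda>c y. \<Phi> (c * S y) 1))"
    by (rule eqm_sw[OF R], rule eqm_counitL[OF R, where \<psi>="\<lambda>f. \<Phi> (_ * S f) 1", simplified]) (intro linmI R l1 l2 linI basicI)+
  also have "eqm R \<dots> (sR (\<epsilon> x) (\<Phi> 1 1))"
    by (rule eqm_antipR[OF R, where \<psi>="\<lambda>u. \<Phi> u 1", simplified]) (intro linmI R l1 l2 linI basicI)+
  finally show ?thesis .
qed

end

lemma sw_swap3: "sw \<Delta> A (\<lambda>c d. sw \<Delta> B (\<lambda>e f. sw \<Delta> C (\<lambda>p q. F c d e f p q))) = sw \<Delta> C (\<lambda>p q. sw \<Delta> A (\<lambda>c d. sw \<Delta> B (\<lambda>e f. F c d e f p q)))"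
proof -
  have "sw \<Delta> A (\<lambda>c d. sw \<Delta> B (\<lambda>e f. sw \<Delta> C (\<lambda>p q. F c d e f p q))) = sw \<Delta> A (\<lambda>c d. sw \<Delta> C (\<lambda>p q. sw \<Delta> B (\<lambda>e f. F c d e f p q)))"
    by (intro sw_cong_eq sw_swap)
  also have "\<dots> = sw \<Delta> C (\<lambda>p q. sw \<Delta> A (\<lambda>c d. sw \<Delta> B (\<lambda>e f. F c d e f p q)))"
    by (rule sw_swap)
  finally show ?thesis .
qed

context hopf begin

lemma sw_S:
  assumes R: "submod sR R" and \<phi>: "bilm sH sH sR R \<phi>"
  shows "eqm R (sw \<Delta> (S h) \<phi>) (sw \<Delta> h (\<lambda>a b. \<phi> (S b) (S a)))"
proof -
  note tr[trans] = eqm_trans[OF R]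
  note l1 = bilm_lin1[OF \<phi>] and l2 = bilm_lin2[OF \<phi>]
  define G where "G z u v = sw \<Delta> z (\<lambda>e f. \<phi> (u * S f) (v * S e))" for z u v
  have Gb: "bilm sH sH sR R (G z)" for z unfolding G_def by (intro bilmI linmI R l1 l2 linI basicI)+
  have Gz: "linm sH sR R (\<lambda>z. G z u v)" for u v unfolding G_def by (intro bilmI linmI R l1 l2 linI basicI)+
  have "eqm R (sw \<Delta> (S h) \<phi>) (sw \<Delta> h (\<lambda>h1 h2. sR (\<epsilon> h2) (sw \<Delta> (S h1) \<phi>)))"
    by (rule eqm_sym[OF R], rule eqm_counitR[OF R, where \<psi>="\<lambda>x. sw \<Delta> (S x) \<phi>"]) (intro linmI R \<phi> linI basicI)+
  also have "eqm R \<dots> (sw \<Delta> h (\<lambda>h1 h2. sw \<Delta> h2 (\<lambda>g z. sw \<Delta> g (\<lambda>c d. sw \<Delta> z (\<lambda>e f. sw \<Delta> (S h1) (\<lambda>p q. \<phi> (p * (c * S f)) (q * (d * S e))))))))"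
  proof (rule eqm_sw[OF R], rule eqm_sym[OF R])
    fix h1 h2
    have "eqm R (sw \<Delta> h2 (\<lambda>g z. sw \<Delta> g (\<lambda>c d. sw \<Delta> z (\<lambda>e f. (\<lambda>u v. sw \<Delta> (S h1) (\<lambda>p q. \<phi> (p * u) (q * v))) (c * S f) (d * S e)))))
      (sR (\<epsilon> h2) ((\<lambda>u v. sw \<Delta> (S h1) (\<lambda>p q. \<phi> (p * u) (q * v))) 1 1))"
      by (rule E1[OF R]) (intro bilmI linmI R l1 l2 linI basicI)+
    then show "eqm R (sw \<Delta> h2 (\<lambda>g z. sw \<Delta> g (\<lambda>c d. sw \<Delta> z (\<lambda>e f. sw \<Delta> (S h1) (\<lambda>p q. \<phi> (p * (c * S f)) (q * (d * S e)))))))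
       (sR (\<epsilon> h2) (sw \<Delta> (S h1) \<phi>))" by simp
  qed
  also have "\<dots> = sw \<Delta> h (\<lambda>h1 h2. sw \<Delta> h2 (\<lambda>g z. sw \<Delta> (S h1) (\<lambda>p q. sw \<Delta> g (\<lambda>c d. G z (p * c) (q * d)))))"
    unfolding G_def by (intro sw_cong_eq, subst sw_swap3, simp add: mult.assoc)
  also have "eqm R \<dots> (sw \<Delta> h (\<lambda>h1 h2. sw \<Delta> h2 (\<lambda>g z. sw \<Delta> (S h1 * g) (G z))))"
    by (rule eqm_sw[OF R], rule eqm_sw[OF R], rule eqm_sym[OF R], rule eqm_mult[OF R Gb])
  also have "eqm R \<dots> (sw \<Delta> h (\<lambda>w z. sw \<Delta> w (\<lambda>h1 g. sw \<Delta> (S h1 * g) (G z))))"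
    by (rule eqm_sym[OF R], rule eqm_coassoc[OF R]) (intro trilmI linmI R Gb Gz linI basicI)+
  also have "eqm R \<dots> (sw \<Delta> h (\<lambda>w z. sR (\<epsilon> w) (sw \<Delta> 1 (G z))))"
    by (rule eqm_sw[OF R], rule eqm_antipL[OF R, where \<psi>="\<lambda>x. sw \<Delta> x (G _)", simplified]) (intro linmI R Gb linI basicI)+
  also have "eqm R \<dots> (sw \<Delta> h (\<lambda>w z. sR (\<epsilon> w) (G z 1 1)))"
    by (rule eqm_sw[OF R], rule eqm_scale[OF R], rule eqm_one[OF R Gb])
  also have "\<dots> = sw \<Delta> h (\<lambda>w z. sR (\<epsilon> w) (sw \<Delta> z (\<lambda>e f. \<phi> (S f) (S e))))"
    unfolding G_def by simp
  also have "eqm R \<dots> (sw \<Delta> h (\<lambda>e f. \<phi> (S f) (S e)))"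
    by (rule eqm_counitL[OF R, where \<psi>="\<lambda>z. sw \<Delta> z (\<lambda>e f. \<phi> (S f) (S e))"]) (intro bilmI linmI R l1 l2 linI basicI)+
  finally show ?thesis .
qed

end

context cchopf begin

lemma sw_cocomm_eq: "module sR \<Longrightarrow> (\<And>n. lin sH sR (\<lambda>m. \<phi> m n)) \<Longrightarrow> (\<And>m. lin sH sR (\<phi> m)) \<Longrightarrow>
   sw \<Delta> h \<phi> = sw \<Delta> h (\<lambda>a b. \<phi> b a)"
  using sw_cocomm[OF submod_zero, of sR \<phi> h] by (simp add: bilm_zero_iff)

lemma eqm_cocomm: "submod sR R \<Longrightarrow> bilm sH sH sR R \<phi> \<Longrightarrow> eqm R (sw \<Delta> h \<phi>) (sw \<Delta> h (\<lambda>a b. \<phi> b a))"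
  unfolding eqm_def by (rule sw_cocomm)

lemma sw_S_cc:
  assumes R: "submod sR R" and \<phi>: "bilm sH sH sR R \<phi>"
  shows "eqm R (sw \<Delta> (S h) \<phi>) (sw \<Delta> h (\<lambda>a b. \<phi> (S a) (S b)))"
proof -
  note l1 = bilm_lin1[OF \<phi>] and l2 = bilm_lin2[OF \<phi>]
  have "eqm R (sw \<Delta> h (\<lambda>a b. \<phi> (S b) (S a))) (sw \<Delta> h (\<lambda>a b. \<phi> (S a) (S b)))"
    by (rule eqm_cocomm[OF R]) (intro bilmI linmI R l1 l2 linI basicI)+
  then show ?thesis using eqm_trans[OF R sw_S[OF R \<phi>]] by blast
qed

lemma S_S: "S (S h) = h"
proof -
  have "S (S h) = sw \<Delta> h (\<lambda>a b. sH (\<epsilon> b) (S (S a)))"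
    by (rule sw_counitR_eq[symmetric]) (auto intro!: linI basicI)
  also have "\<dots> = sw \<Delta> h (\<lambda>a b. sw \<Delta> b (\<lambda>c d. S (S a) * (S c * d)))"
  proof (rule sw_cong_eq)
    fix a b
    have "sH (\<epsilon> b) (S (S a)) = S (S a) * sH (\<epsilon> b) 1" by (simp add: k_alg_scale_mult2[OF kH])
    also have "\<dots> = S (S a) * sw \<Delta> b (\<lambda>c d. S c * d)" using antipL[of b] by (simp add: sw_def)
    finally show "sH (\<epsilon> b) (S (S a)) = sw \<Delta> b (\<lambda>c d. S (S a) * (S c * d))" by (simp add: sw_cmult)
  qed
  also have "\<dots> = sw \<Delta> h (\<lambda>w d. sw \<Delta> w (\<lambda>a c. S (S a) * (S c * d)))"
    by (rule sw_coassoc_eq[symmetric]) (auto intro!: linI basicI)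
  also have "\<dots> = sw \<Delta> h (\<lambda>w d. sw \<Delta> w (\<lambda>a c. S (c * S a) * d))"
    by (simp add: S_mult mult.assoc)
  also have "\<dots> = sw \<Delta> h (\<lambda>w d. sw \<Delta> w (\<lambda>a c. S (a * S c) * d))"
  proof (rule sw_cong_eq)
    fix w d show "sw \<Delta> w (\<lambda>a c. S (c * S a) * d) = sw \<Delta> w (\<lambda>a c. S (a * S c) * d)"
      by (rule sw_cocomm_eq) (auto intro!: linI basicI)
  qed
  also have "\<dots> = sw \<Delta> h (\<lambda>w d. sH (\<epsilon> w) (S 1 * d))"
  proof (rule sw_cong_eq)
    fix w d show "sw \<Delta> w (\<lambda>a c. S (a * S c) * d) = sH (\<epsilon> w) (S 1 * d)"
      by (rule sw_antipR_eq[where sR=sH and \<psi>="\<lambda>u. S u * d"]) (auto intro!: linI basicI)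
  qed
  also have "\<dots> = h"
    by (simp add: S_one, rule sw_counitL_eq) (auto intro!: linI basicI)
  finally show ?thesis .
qed

end

definition tsc :: "'k::comm_ring_1 \<Rightarrow> ('p \<Rightarrow> 'k) \<Rightarrow> ('p \<Rightarrow> 'k)" where
  "tsc r F = (\<lambda>p. r * F p)"

lemma module_tsc: "module (tsc :: 'k::comm_ring_1 \<Rightarrow> ('p \<Rightarrow> 'k) \<Rightarrow> ('p \<Rightarrow> 'k))"
  by (simp add: module_def tsc_def fun_eq_iff algebra_simps)

lemma submod_tens2: "submod tsc (tens2_rel sM sN)"
  unfolding submod_def
proof (intro conjI ballI allI)
  show "module tsc" by (rule module_tsc)
  show "0 \<in> tens2_rel sM sN" by (rule tens2_rel.zero)
  fix x y assume "x \<in> tens2_rel sM sN" "y \<in> tens2_rel sM sN"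
  then show "x + y \<in> tens2_rel sM sN" by (rule tens2_rel.add)
next
  fix c x assume "x \<in> tens2_rel sM sN"
  then show "tsc c x \<in> tens2_rel sM sN" unfolding tsc_def by (rule tens2_rel.scale)
qed

lemma teq2_eqm: "teq2 sM sN xs ys \<longleftrightarrow> eqm (tens2_rel sM sN) (fsum xs) (fsum ys)"
  by (simp add: teq2_def eqm_def)

lemma fsum_single_add1: "fsum [(m + m', n)] - (fsum [(m, n)] + fsum [(m', n)]) \<in> tens2_rel sM sN"
  using tens2_rel.addL[where sM=sM and sN=sN and m=m and m'=m' and n=n] by (simp add: diff_diff_eq)
lemma fsum_single_add2: "fsum [(m, n + n')] - (fsum [(m, n)] + fsum [(m, n')]) \<in> tens2_rel sM sN"
  using tens2_rel.addR[where sM=sM and sN=sN and m=m and n'=n' and n=n] by (simp add: diff_diff_eq)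

lemma linmT_L: "lin sX sM \<alpha> \<Longrightarrow> linm sX tsc (tens2_rel sM sN) (\<lambda>x. fsum [(\<alpha> x, c)])"
  unfolding linm_def lin_def
  using fsum_single_add1[where sM=sM and sN=sN] tens2_rel.smulL[where sM=sM and sN=sN] by (simp add: tsc_def)
lemma linmT_R: "lin sX sN \<beta> \<Longrightarrow> linm sX tsc (tens2_rel sM sN) (\<lambda>x. fsum [(c, \<beta> x)])"
  unfolding linm_def lin_def
  using fsum_single_add2[where sM=sM and sN=sN] tens2_rel.smulR[where sM=sM and sN=sN] by (simp add: tsc_def)

lemma fsum_map_scaleL: "eqm (tens2_rel sM sN) (fsum (map (\<lambda>(a, b). (sM r a, b)) L)) (tsc r (fsum L))"
proof (induction L)
  case Nil
  have e: "fsum (map (\<lambda>(a, b). (sM r a, b)) []) - tsc r (fsum []) = 0" by (simp add: fsum_def tsc_def fun_eq_iff)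
  show ?case unfolding eqm_def e by (rule tens2_rel.zero)
next
  case (Cons p L)
  obtain a b where p: "p = (a, b)" by force
  have 1: "fsum [(sM r a, b)] - tsc r (fsum [(a, b)]) \<in> tens2_rel sM sN"
    using tens2_rel.smulL[where sM=sM and sN=sN and r=r and m=a and n=b] by (simp add: tsc_def)
  have "(fsum [(sM r a, b)] + fsum (map (\<lambda>(a, b). (sM r a, b)) L)) - (tsc r (fsum [(a, b)]) + tsc r (fsum L)) \<in> tens2_rel sM sN"
    using submod_add2[OF submod_tens2 1 Cons.IH[unfolded eqm_def]] .
  moreover have "tsc r (fsum [(a, b)]) + tsc r (fsum L) = tsc r (fsum [(a, b)] + fsum L)"
    by (simp add: tsc_def fun_eq_iff distrib_left)
  moreover have "fsum (map (\<lambda>(a, b). (sM r a, b)) (p # L)) = fsum [(sM r a, b)] + fsum (map (\<lambda>(a, b). (sM r a, b)) L)"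
    unfolding p by (subst fsum_Cons[symmetric]) simp
  moreover have "fsum (p # L) = fsum [(a, b)] + fsum L" unfolding p by (rule fsum_Cons)
  ultimately show ?case unfolding eqm_def by (metis p)
qed

lemma fsum_list: "fsum xs = (\<Sum>p\<leftarrow>xs. fsum [p])"
  by (induction xs) (simp add: fsum_Nil, subst fsum_Cons, simp)

lemma linm_sum_list_param[linmI]: "submod sR R \<Longrightarrow> (\<And>i. linm sX sR R (\<lambda>x. F x i)) \<Longrightarrow> linm sX sR R (\<lambda>x. \<Sum>i\<leftarrow>L. F x i)"
proof (induction L)
  case Nil then show ?case by (simp add: linm_def submod_0 module.scale_zero_right[OF submod_module])
next
  case (Cons a L)
  have "linm sX sR R (\<lambda>x. F x a + (\<Sum>i\<leftarrow>L. F x i))"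
    by (rule linm_add[OF Cons.prems(1) Cons.prems(2) Cons.IH[OF Cons.prems]])
  then show ?case by simp
qed

lemma fsum_tmult: "fsum (tmult xs ys) = (\<Sum>(a, b)\<leftarrow>xs. \<Sum>(c, d)\<leftarrow>ys. fsum [(a * c, b * d)])"
  unfolding tmult_def fsum_concat by (simp add: o_def case_prod_beta' fsum_concat, subst fsum_list, simp add: o_def)


lemma fsum_map2: "fsum (map (\<lambda>(x, y). (f x y, g x y)) xs) = (\<Sum>(x, y)\<leftarrow>xs. fsum [(f x y, g x y)])"
  by (subst fsum_list) (simp add: o_def case_prod_beta')

lemma tmult_congL:
  assumes kM: "k_algebra sM" and kN: "k_algebra sN" and t: "teq2 sM sN xs xs'"
  shows "teq2 sM sN (tmult xs ys) (tmult xs' ys)"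
proof -
  have "(\<Sum>(a, b)\<leftarrow>xs. (\<lambda>a b. \<Sum>(c, d)\<leftarrow>ys. fsum [(a * c, b * d)]) a b) - (\<Sum>(a, b)\<leftarrow>xs'. (\<lambda>a b. \<Sum>(c, d)\<leftarrow>ys. fsum [(a * c, b * d)]) a b) \<in> tens2_rel sM sN"
  proof (rule teq2_ext[OF submod_tens2 _ _ t])
    fix n show "linm sM tsc (tens2_rel sM sN) (\<lambda>m. \<Sum>(c, d)\<leftarrow>ys. fsum [(m * c, n * d)])"
      unfolding split_def
      by (intro linmI submod_tens2 linmT_L linI kM kN k_algebra_module)
  next
    fix m show "linm sN tsc (tens2_rel sM sN) (\<lambda>n. \<Sum>(c, d)\<leftarrow>ys. fsum [(m * c, n * d)])"
      unfolding split_def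
      by (intro linmI submod_tens2 linmT_R linI kM kN k_algebra_module)
  qed
  then show ?thesis unfolding teq2_def by (simp add: fsum_tmult)
qed

lemma tmult_congR:
  assumes kM: "k_algebra sM" and kN: "k_algebra sN" and t: "teq2 sM sN ys ys'"
  shows "teq2 sM sN (tmult xs ys) (tmult xs ys')"
proof -
  have "(\<Sum>(c, d)\<leftarrow>ys. (\<lambda>c d. \<Sum>(a, b)\<leftarrow>xs. fsum [(a * c, b * d)]) c d) - (\<Sum>(c, d)\<leftarrow>ys'. (\<lambda>c d. \<Sum>(a, b)\<leftarrow>xs. fsum [(a * c, b * d)]) c d) \<in> tens2_rel sM sN"
  proof (rule teq2_ext[OF submod_tens2 _ _ t])
    fix n show "linm sM tsc (tens2_rel sM sN) (\<lambda>m. \<Sum>(a, b)\<leftarrow>xs. fsum [(a * m, b * n)])"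
      unfolding split_def
      by (intro linmI submod_tens2 linmT_L linI kM kN k_algebra_module)
  next
    fix m show "linm sN tsc (tens2_rel sM sN) (\<lambda>n. \<Sum>(a, b)\<leftarrow>xs. fsum [(a * m, b * n)])"
      unfolding split_def
      by (intro linmI submod_tens2 linmT_R linI kM kN k_algebra_module)
  qed
  then show ?thesis unfolding teq2_def fsum_tmult
    by (simp add: split_def sum_list_swap[where xs=xs])
qed

locale cleft = cchopf sH \<Delta> \<epsilon> S
  for sH :: "'k::comm_ring_1 \<Rightarrow> 'h::ring_1 \<Rightarrow> 'h"
    and \<Delta> :: "'h \<Rightarrow> ('h \<times> 'h) list" and \<epsilon> :: "'h \<Rightarrow> 'k" and S :: "'h \<Rightarrow> 'h" +
  fixes sA :: "'k \<Rightarrow> 'a::ring_1 \<Rightarrow> 'a" and \<rho> :: "'a \<Rightarrow> ('a \<times> 'h) list"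
    and t u :: "'h \<Rightarrow> 'a"
  assumes comod: "right_comodule_algebra sA \<rho> sH \<Delta> \<epsilon>"
    and Bcomm: "\<forall>a \<in> coinv sA sH \<rho>. \<forall>b \<in> coinv sA sH \<rho>. a * b = b * a"
    and t_lin: "t \<in> HomHA sH sA" and t_colin: "colinear sA sH \<rho> \<Delta> t"
    and u_lin: "u \<in> HomHA sH sA"
    and tu: "conv \<Delta> t u = cunit sA \<epsilon>" and ut: "conv \<Delta> u t = cunit sA \<epsilon>"
begin

abbreviation "RT \<equiv> tens2_rel sA sH"

lemma kA: "k_algebra sA" using comod by (simp add: right_comodule_algebra_def)
lemma modA: "module sA" using kA by (simp add: k_algebra_def)
lemmas basicI2 = basicI kA modA

lemma RT: "submod tsc RT" by (rule submod_tens2)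

lemma rho_add: "teq2 sA sH (\<rho> (x + y)) (\<rho> x @ \<rho> y)" using comod by (simp add: right_comodule_algebra_def)
lemma rho_scale: "teq2 sA sH (\<rho> (sA r x)) (map (\<lambda>(a, b). (sA r a, b)) (\<rho> x))" using comod by (simp add: right_comodule_algebra_def)
lemma rho_mult0: "teq2 sA sH (\<rho> (x * y)) (tmult (\<rho> x) (\<rho> y))" using comod by (simp add: right_comodule_algebra_def)
lemma rho_one: "teq2 sA sH (\<rho> 1) [(1, 1)]" using comod by (simp add: right_comodule_algebra_def)

lemma rho_linm: "linm sA tsc RT (\<lambda>a. fsum (\<rho> a))"
  unfolding linm_def
proof (intro conjI allI)
  fix x y show "fsum (\<rho> (x + y)) - (fsum (\<rho> x) + fsum (\<rho> y)) \<in> RT"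
    using rho_add[of x y] by (simp add: teq2_def fsum_append)
next
  fix c x show "fsum (\<rho> (sA c x)) - tsc c (fsum (\<rho> x)) \<in> RT"
    using eqm_trans[OF RT rho_scale[of c x, unfolded teq2_eqm] fsum_map_scaleL] by (simp add: eqm_def)
qed

lemma linmT_rho[linmI]: "lin sX sA \<alpha> \<Longrightarrow> linm sX tsc RT (\<lambda>x. fsum (\<rho> (\<alpha> x)))"
  by (rule linm_comp[OF rho_linm])

lemma rho_sw: "eqm RT (fsum (\<rho> (sw \<Delta> h \<phi>))) (sw \<Delta> h (\<lambda>a b. fsum (\<rho> (\<phi> a b))))"
  using linm_sum_list[OF rho_linm RT, of "case_prod \<phi>" "\<Delta> h"]
  by (simp add: eqm_def sw_def case_prod_beta')

lemma first_sw: "eqm RT (fsum [(sw \<Delta> h \<phi>, c)]) (sw \<Delta> h (\<lambda>a b. fsum [(\<phi> a b, c)]))"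
  using linm_sum_list[OF linmT_L[OF lin_id] RT, of "case_prod \<phi>" "\<Delta> h"]
  by (simp add: eqm_def sw_def case_prod_beta')

lemma rho_prod: "eqm RT (fsum (\<rho> a)) (fsum La) \<Longrightarrow> eqm RT (fsum (\<rho> b)) (fsum Lb) \<Longrightarrow>
   eqm RT (fsum (\<rho> (a * b))) (fsum (tmult La Lb))"
proof -
  assume 1: "eqm RT (fsum (\<rho> a)) (fsum La)" and 2: "eqm RT (fsum (\<rho> b)) (fsum Lb)"
  have "teq2 sA sH (tmult (\<rho> a) (\<rho> b)) (tmult La (\<rho> b))"
    by (rule tmult_congL[OF kA kH]) (use 1 in \<open>simp add: teq2_eqm\<close>)
  moreover have "teq2 sA sH (tmult La (\<rho> b)) (tmult La Lb)"
    by (rule tmult_congR[OF kA kH]) (use 2 in \<open>simp add: teq2_eqm\<close>)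
  ultimately show ?thesis using rho_mult0[of a b] unfolding teq2_eqm
    by (meson eqm_trans[OF RT])
qed

definition anticolin :: "('h \<Rightarrow> 'a) \<Rightarrow> bool" where
  "anticolin g \<longleftrightarrow> (\<forall>h. teq2 sA sH (\<rho> (g h)) (map (\<lambda>(x, y). (g y, S x)) (\<Delta> h)))"

lemma coinv_eqm: "a \<in> coinv sA sH \<rho> \<longleftrightarrow> eqm RT (fsum (\<rho> a)) (fsum [(a, 1)])"
  by (simp add: coinv_def teq2_eqm)

lemma colinD: "colinear sA sH \<rho> \<Delta> f \<Longrightarrow> eqm RT (fsum (\<rho> (f h))) (fsum (map (\<lambda>(x, y). (f x, y)) (\<Delta> h)))"
  by (simp add: colinear_def teq2_eqm)
lemma anticolinD: "anticolin g \<Longrightarrow> eqm RT (fsum (\<rho> (g h))) (fsum (map (\<lambda>(x, y). (g y, S x)) (\<Delta> h)))"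
  by (simp add: anticolin_def teq2_eqm)

lemma fsum_tmult_maps: "fsum (tmult (map (\<lambda>(x, y). (F x y, G x y)) L1) (map (\<lambda>(x, y). (F' x y, G' x y)) L2))
  = (\<Sum>(a, b)\<leftarrow>L1. \<Sum>(c, d)\<leftarrow>L2. fsum [(F a b * F' c d, G a b * G' c d)])"
  by (simp add: fsum_tmult o_def case_prod_beta')

lemma L1a:
  assumes f: "lin sH sA f" "colinear sA sH \<rho> \<Delta> f" and g: "lin sH sA g" "anticolin g"
  shows "conv \<Delta> f g h \<in> coinv sA sH \<rho>"
proof -
  note tr[trans] = eqm_trans[OF RT]
  have "eqm RT (fsum (\<rho> (conv \<Delta> f g h))) (sw \<Delta> h (\<lambda>x y. fsum (\<rho> (f x * g y))))"
    unfolding conv_def using rho_sw[of h "\<lambda>x y. f x * g y"] by (simp add: sw_def)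
  also have "eqm RT \<dots> (sw \<Delta> h (\<lambda>x y. fsum (tmult (map (\<lambda>(x, y). (f x, y)) (\<Delta> x)) (map (\<lambda>(x, y). (g y, S x)) (\<Delta> y)))))"
    by (intro eqm_sw[OF RT] rho_prod colinD anticolinD f g)
  also have "\<dots> = sw \<Delta> h (\<lambda>x y. sw \<Delta> x (\<lambda>x1 x2. sw \<Delta> y (\<lambda>y1 y2. fsum [(f x1 * g y2, x2 * S y1)])))"
    by (simp add: fsum_tmult_maps sw_def)
  also have "eqm RT \<dots> (sw \<Delta> h (\<lambda>x1 z. sw \<Delta> z (\<lambda>x2 y. sw \<Delta> y (\<lambda>y1 y2. fsum [(f x1 * g y2, x2 * S y1)]))))"
    by (rule eqm_coassoc[OF RT]) (intro trilmI bilmI linmI RT linmT_L linmT_R f g linI basicI2)+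
  also have "eqm RT \<dots> (sw \<Delta> h (\<lambda>x1 z. sw \<Delta> z (\<lambda>w y2. sw \<Delta> w (\<lambda>x2 y1. fsum [(f x1 * g y2, x2 * S y1)]))))"
    by (rule eqm_sw[OF RT], rule eqm_sym[OF RT], rule eqm_coassoc[OF RT])
      (intro trilmI bilmI linmI RT linmT_L linmT_R f g linI basicI2)+
  also have "eqm RT \<dots> (sw \<Delta> h (\<lambda>x1 z. sw \<Delta> z (\<lambda>w y2. tsc (\<epsilon> w) (fsum [(f x1 * g y2, 1)]))))"
    by (rule eqm_sw[OF RT], rule eqm_sw[OF RT], rule eqm_antipR[OF RT, where \<psi>="\<lambda>u. fsum [(_, u)]"])
      (intro bilmI linmI RT linmT_L linmT_R f g linI basicI2)+
  also have "eqm RT \<dots> (sw \<Delta> h (\<lambda>x1 z. fsum [(f x1 * g z, 1)]))"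
    by (rule eqm_sw[OF RT], rule eqm_counitL[OF RT, where \<psi>="\<lambda>y. fsum [(_ * g y, 1)]"])
      (intro bilmI linmI RT linmT_L linmT_R f g linI basicI2)+
  also have "eqm RT \<dots> (fsum [(conv \<Delta> f g h, 1)])"
    unfolding conv_def using eqm_sym[OF RT first_sw[of h "\<lambda>x y. f x * g y" 1]] by (simp add: sw_def)
  finally show ?thesis by (simp add: coinv_eqm)
qed

end

context cleft begin

abbreviation "B \<equiv> coinv sA sH \<rho>"

lemma conv_sw: "conv \<Delta> f g h = sw \<Delta> h (\<lambda>a b. f a * g b)"
  by (simp add: conv_def sw_def)

lemma B_sw: "(\<And>a b. \<phi> a b \<in> B) \<Longrightarrow> sw \<Delta> h \<phi> \<in> B"
proof -
  assume a: "\<And>a b. \<phi> a b \<in> B"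
  note tr[trans] = eqm_trans[OF RT]
  have "eqm RT (fsum (\<rho> (sw \<Delta> h \<phi>))) (sw \<Delta> h (\<lambda>a b. fsum (\<rho> (\<phi> a b))))" by (rule rho_sw)
  also have "eqm RT \<dots> (sw \<Delta> h (\<lambda>a b. fsum [(\<phi> a b, 1)]))"
    by (rule eqm_sw[OF RT]) (use a in \<open>simp add: coinv_eqm\<close>)
  also have "eqm RT \<dots> (fsum [(sw \<Delta> h \<phi>, 1)])" by (rule eqm_sym[OF RT first_sw])
  finally show ?thesis by (simp add: coinv_eqm)
qed

lemma B_mult: "a \<in> B \<Longrightarrow> b \<in> B \<Longrightarrow> a * b \<in> B"
  using rho_prod[of a "[(a, 1)]" b "[(b, 1)]"] by (simp add: coinv_eqm tmult_def)

lemma B_one: "1 \<in> B"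
  using rho_one by (simp add: coinv_def)

lemma B_scale: "a \<in> B \<Longrightarrow> sA r a \<in> B"
proof -
  assume a: "a \<in> B"
  note tr[trans] = eqm_trans[OF RT]
  have "eqm RT (fsum (\<rho> (sA r a))) (tsc r (fsum (\<rho> a)))" using rho_linm by (simp add: linm_def eqm_def)
  also have "eqm RT \<dots> (tsc r (fsum [(a, 1)]))" by (rule eqm_scale[OF RT]) (use a in \<open>simp add: coinv_eqm\<close>)
  also have "eqm RT \<dots> (fsum [(sA r a, 1)])" using linmT_L[OF lin_id[of sA], where sN=sH and c=1] RT
    by (simp add: linm_def eqm_def) (metis eqm_def eqm_sym)
  finally show ?thesis by (simp add: coinv_eqm)
qed

lemma cunit_B: "cunit sA \<epsilon> h \<in> B"
  by (simp add: cunit_def B_scale B_one)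

lemma conv_B: "(\<And>h. f h \<in> B) \<Longrightarrow> (\<And>h. g h \<in> B) \<Longrightarrow> conv \<Delta> f g h \<in> B"
  unfolding conv_def using B_sw[of "\<lambda>a b. f a * g b" h] B_mult by (simp add: sw_def)

lemma L1b:
  assumes g: "lin sH sA g" "anticolin g" and f: "lin sH sA f" "colinear sA sH \<rho> \<Delta> f"
  shows "conv \<Delta> g f h \<in> B"
proof -
  note tr[trans] = eqm_trans[OF RT]
  have "eqm RT (fsum (\<rho> (conv \<Delta> g f h))) (sw \<Delta> h (\<lambda>x y. fsum (\<rho> (g x * f y))))"
    unfolding conv_def using rho_sw[of h "\<lambda>x y. g x * f y"] by (simp add: sw_def)
  also have "eqm RT \<dots> (sw \<Delta> h (\<lambda>x y. fsum (tmult (map (\<lambda>(x, y). (g y, S x)) (\<Delta> x)) (map (\<lambda>(x, y). (f x, y)) (\<Delta> y)))))"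
    by (intro eqm_sw[OF RT] rho_prod colinD anticolinD f g)
  also have "\<dots> = sw \<Delta> h (\<lambda>x y. sw \<Delta> x (\<lambda>x1 x2. sw \<Delta> y (\<lambda>y1 y2. fsum [(g x2 * f y1, S x1 * y2)])))"
    by (simp add: fsum_tmult_maps sw_def)
  also have "eqm RT \<dots> (sw \<Delta> h (\<lambda>x1 z. sw \<Delta> z (\<lambda>x2 y. sw \<Delta> y (\<lambda>y1 y2. fsum [(g x2 * f y1, S x1 * y2)]))))"
    by (rule eqm_coassoc[OF RT]) (intro trilmI bilmI linmI RT linmT_L linmT_R f g linI basicI2)+
  also have "eqm RT \<dots> (sw \<Delta> h (\<lambda>x1 z. sw \<Delta> z (\<lambda>m y2. sw \<Delta> m (\<lambda>x2 y1. fsum [(g x2 * f y1, S x1 * y2)]))))"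
    by (rule eqm_sw[OF RT], rule eqm_sym[OF RT], rule eqm_coassoc[OF RT])
      (intro trilmI bilmI linmI RT linmT_L linmT_R f g linI basicI2)+
  also have "eqm RT \<dots> (sw \<Delta> h (\<lambda>n y2. sw \<Delta> n (\<lambda>x1 m. sw \<Delta> m (\<lambda>x2 y1. fsum [(g x2 * f y1, S x1 * y2)]))))"
    by (rule eqm_sym[OF RT], rule eqm_coassoc[OF RT])
      (intro trilmI bilmI linmI RT linmT_L linmT_R f g linI basicI2)+
  also have "eqm RT \<dots> (sw \<Delta> h (\<lambda>n y2. sw \<Delta> n (\<lambda>m x1. sw \<Delta> m (\<lambda>x2 y1. fsum [(g x2 * f y1, S x1 * y2)]))))"
    by (rule eqm_sw[OF RT], rule eqm_cocomm[OF RT])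
      (intro trilmI bilmI linmI RT linmT_L linmT_R f g linI basicI2)+
  also have "eqm RT \<dots> (sw \<Delta> h (\<lambda>m n. sw \<Delta> n (\<lambda>x1 y2. sw \<Delta> m (\<lambda>x2 y1. fsum [(g x2 * f y1, S x1 * y2)]))))"
    by (rule eqm_coassoc[OF RT])
      (intro trilmI bilmI linmI RT linmT_L linmT_R f g linI basicI2)+
  also have "eqm RT \<dots> (sw \<Delta> h (\<lambda>m n. tsc (\<epsilon> n) (sw \<Delta> m (\<lambda>x2 y1. fsum [(g x2 * f y1, 1)]))))"
    by (rule eqm_sw[OF RT], rule eqm_antipL[OF RT, where \<psi>="\<lambda>u. sw \<Delta> _ (\<lambda>x2 y1. fsum [(g x2 * f y1, u)])"])
      (intro trilmI bilmI linmI RT linmT_L linmT_R f g linI basicI2)+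
  also have "eqm RT \<dots> (sw \<Delta> h (\<lambda>x2 y1. fsum [(g x2 * f y1, 1)]))"
    by (rule eqm_counitR[OF RT, where \<psi>="\<lambda>m. sw \<Delta> m (\<lambda>x2 y1. fsum [(g x2 * f y1, 1)])"])
      (intro trilmI bilmI linmI RT linmT_L linmT_R f g linI basicI2)+
  also have "eqm RT \<dots> (fsum [(conv \<Delta> g f h, 1)])"
    unfolding conv_def using eqm_sym[OF RT first_sw[of h "\<lambda>x y. g x * f y" 1]] by (simp add: sw_def)
  finally show ?thesis by (simp add: coinv_eqm)
qed

lemma fsum_map3: "fsum (map (\<lambda>(x, y, z). (F x y z, G x y z)) xs) = (\<Sum>(x, y, z)\<leftarrow>xs. fsum [(F x y z, G x y z)])"
  by (subst fsum_list) (simp add: o_def case_prod_beta')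

lemma D3_left: "D3 \<Delta> h = D_left \<Delta> \<Delta> h"
  by (simp add: D3_def D_left_def)

lemma L4:
  assumes w: "lin sH sA w" "\<And>h. w h \<in> B"
  shows "teq2 sA sH (\<rho> (w h)) (map (\<lambda>(x, y, z). (w y, S x * z)) (D3 \<Delta> h))"
proof -
  note tr[trans] = eqm_trans[OF RT]
  have "eqm RT (fsum (map (\<lambda>(x, y, z). (w y, S x * z)) (D3 \<Delta> h))) (sw \<Delta> h (\<lambda>x y. sw \<Delta> y (\<lambda>y1 y2. fsum [(w y1, S x * y2)])))"
    unfolding fsum_map3 D3_left sum_D_left by (rule eqm_refl[OF RT])
  also have "eqm RT \<dots> (sw \<Delta> h (\<lambda>m y2. sw \<Delta> m (\<lambda>x y1. fsum [(w y1, S x * y2)])))"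
    by (rule eqm_sym[OF RT], rule eqm_coassoc[OF RT])
      (intro trilmI bilmI linmI RT linmT_L linmT_R w linI basicI2)+
  also have "eqm RT \<dots> (sw \<Delta> h (\<lambda>m y2. sw \<Delta> m (\<lambda>y1 x. fsum [(w y1, S x * y2)])))"
    by (rule eqm_sw[OF RT], rule eqm_cocomm[OF RT])
      (intro trilmI bilmI linmI RT linmT_L linmT_R w linI basicI2)+
  also have "eqm RT \<dots> (sw \<Delta> h (\<lambda>y1 n. sw \<Delta> n (\<lambda>x y2. fsum [(w y1, S x * y2)])))"
    by (rule eqm_coassoc[OF RT])
      (intro trilmI bilmI linmI RT linmT_L linmT_R w linI basicI2)+
  also have "eqm RT \<dots> (sw \<Delta> h (\<lambda>y1 n. tsc (\<epsilon> n) (fsum [(w y1, 1)])))"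
    by (rule eqm_sw[OF RT], rule eqm_antipL[OF RT, where \<psi>="\<lambda>u. fsum [(_, u)]"])
      (intro trilmI bilmI linmI RT linmT_L linmT_R w linI basicI2)+
  also have "eqm RT \<dots> (fsum [(w h, 1)])"
    by (rule eqm_counitR[OF RT, where \<psi>="\<lambda>m. fsum [(w m, 1)]"])
      (intro trilmI bilmI linmI RT linmT_L linmT_R w linI basicI2)+
  also have "eqm RT \<dots> (fsum (\<rho> (w h)))" using w(2)[of h] by (simp add: coinv_eqm eqm_sym[OF RT])
  finally show ?thesis unfolding teq2_eqm by (rule eqm_sym[OF RT])
qed

lemma Td1:
  assumes v: "lin sH sA v" "\<And>h. v h \<in> B" and f: "lin sH sA f" "colinear sA sH \<rho> \<Delta> f"
  shows "colinear sA sH \<rho> \<Delta> (conv \<Delta> v f)"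
  unfolding colinear_def teq2_eqm
proof
  fix h
  note tr[trans] = eqm_trans[OF RT]
  have "eqm RT (fsum (\<rho> (conv \<Delta> v f h))) (sw \<Delta> h (\<lambda>x y. fsum (\<rho> (v x * f y))))"
    unfolding conv_def using rho_sw[of h "\<lambda>x y. v x * f y"] by (simp add: sw_def)
  also have "eqm RT \<dots> (sw \<Delta> h (\<lambda>x y. fsum (tmult [(v x, 1)] (map (\<lambda>(x, y). (f x, y)) (\<Delta> y)))))"
    by (intro eqm_sw[OF RT] rho_prod colinD f) (use v in \<open>simp add: coinv_eqm\<close>)
  also have "\<dots> = sw \<Delta> h (\<lambda>x y. sw \<Delta> y (\<lambda>y1 y2. fsum [(v x * f y1, y2)]))"
    by (simp add: fsum_tmult sw_def o_def case_prod_beta')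
  also have "eqm RT \<dots> (sw \<Delta> h (\<lambda>x y. sw \<Delta> x (\<lambda>a c. fsum [(v a * f c, y)])))"
    by (rule eqm_sym[OF RT], rule eqm_coassoc[OF RT])
      (intro trilmI bilmI linmI RT linmT_L linmT_R f v linI basicI2)+
  also have "eqm RT \<dots> (sw \<Delta> h (\<lambda>x y. fsum [(conv \<Delta> v f x, y)]))"
    unfolding conv_sw by (rule eqm_sw[OF RT], rule eqm_sym[OF RT], rule first_sw)
  also have "\<dots> = fsum (map (\<lambda>(x, y). (conv \<Delta> v f x, y)) (\<Delta> h))"
    by (simp add: fsum_map2 sw_def)
  finally show "eqm RT (fsum (\<rho> (conv \<Delta> v f h))) (fsum (map (\<lambda>(x, y). (conv \<Delta> v f x, y)) (\<Delta> h)))" .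
qed

lemma Td2:
  assumes v: "lin sH sA v" "\<And>h. v h \<in> B" and f: "lin sH sA f" "colinear sA sH \<rho> \<Delta> f"
  shows "colinear sA sH \<rho> \<Delta> (conv \<Delta> f v)"
  unfolding colinear_def teq2_eqm
proof
  fix h
  note tr[trans] = eqm_trans[OF RT]
  have "eqm RT (fsum (\<rho> (conv \<Delta> f v h))) (sw \<Delta> h (\<lambda>x y. fsum (\<rho> (f x * v y))))"
    unfolding conv_def using rho_sw[of h "\<lambda>x y. f x * v y"] by (simp add: sw_def)
  also have "eqm RT \<dots> (sw \<Delta> h (\<lambda>x y. fsum (tmult (map (\<lambda>(x, y). (f x, y)) (\<Delta> x)) [(v y, 1)])))"
    by (intro eqm_sw[OF RT] rho_prod colinD f) (use v in \<open>simp add: coinv_eqm\<close>)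
  also have "\<dots> = sw \<Delta> h (\<lambda>x y. sw \<Delta> x (\<lambda>x1 x2. fsum [(f x1 * v y, x2)]))"
    by (simp add: fsum_tmult sw_def o_def case_prod_beta')
  also have "eqm RT \<dots> (sw \<Delta> h (\<lambda>x1 z. sw \<Delta> z (\<lambda>x2 y. fsum [(f x1 * v y, x2)])))"
    by (rule eqm_coassoc[OF RT])
      (intro trilmI bilmI linmI RT linmT_L linmT_R f v linI basicI2)+
  also have "eqm RT \<dots> (sw \<Delta> h (\<lambda>x1 z. sw \<Delta> z (\<lambda>c y. fsum [(f x1 * v c, y)])))"
    by (rule eqm_sw[OF RT], rule eqm_cocomm[OF RT])
      (intro trilmI bilmI linmI RT linmT_L linmT_R f v linI basicI2)+
  also have "eqm RT \<dots> (sw \<Delta> h (\<lambda>x y. sw \<Delta> x (\<lambda>a c. fsum [(f a * v c, y)])))"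
    by (rule eqm_sym[OF RT], rule eqm_coassoc[OF RT])
      (intro trilmI bilmI linmI RT linmT_L linmT_R f v linI basicI2)+
  also have "eqm RT \<dots> (sw \<Delta> h (\<lambda>x y. fsum [(conv \<Delta> f v x, y)]))"
    unfolding conv_sw by (rule eqm_sw[OF RT], rule eqm_sym[OF RT], rule first_sw)
  also have "\<dots> = fsum (map (\<lambda>(x, y). (conv \<Delta> f v x, y)) (\<Delta> h))"
    by (simp add: fsum_map2 sw_def)
  finally show "eqm RT (fsum (\<rho> (conv \<Delta> f v h))) (fsum (map (\<lambda>(x, y). (conv \<Delta> f v x, y)) (\<Delta> h)))" .
qed

lemma anticolin_S:
  assumes f: "lin sH sA f" "colinear sA sH \<rho> \<Delta> f"
  shows "anticolin (\<lambda>h. f (S h))"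
  unfolding anticolin_def teq2_eqm
proof
  fix h
  note tr[trans] = eqm_trans[OF RT]
  have "eqm RT (fsum (\<rho> (f (S h)))) (fsum (map (\<lambda>(x, y). (f x, y)) (\<Delta> (S h))))" by (rule colinD[OF f(2)])
  also have "\<dots> = sw \<Delta> (S h) (\<lambda>x y. fsum [(f x, y)])" by (simp add: fsum_map2 sw_def)
  also have "eqm RT \<dots> (sw \<Delta> h (\<lambda>a b. fsum [(f (S b), S a)]))"
    by (rule sw_S[OF RT]) (intro trilmI bilmI linmI RT linmT_L linmT_R f linI basicI2)+
  also have "\<dots> = fsum (map (\<lambda>(x, y). (f (S y), S x)) (\<Delta> h))" by (simp add: fsum_map2 sw_def)
  finally show "eqm RT (fsum (\<rho> (f (S h)))) (fsum (map (\<lambda>(x, y). (f (S y), S x)) (\<Delta> h)))" .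
qed

end

definition sw3 :: "('h \<Rightarrow> ('h \<times> 'h) list) \<Rightarrow> 'h \<Rightarrow> ('h \<Rightarrow> 'h \<Rightarrow> 'h \<Rightarrow> 'r::ab_group_add) \<Rightarrow> 'r" where
  "sw3 \<Delta> h F = sw \<Delta> h (\<lambda>a x. sw \<Delta> x (\<lambda>b c. F a b c))"
definition sw4 :: "('h \<Rightarrow> ('h \<times> 'h) list) \<Rightarrow> 'h \<Rightarrow> ('h \<Rightarrow> 'h \<Rightarrow> 'h \<Rightarrow> 'h \<Rightarrow> 'r::ab_group_add) \<Rightarrow> 'r" where
  "sw4 \<Delta> h F = sw \<Delta> h (\<lambda>a x. sw3 \<Delta> x (\<lambda>b c d. F a b c d))"

lemma sw3_cong: "(\<And>a b c. F a b c = G a b c) \<Longrightarrow> sw3 \<Delta> h F = sw3 \<Delta> h G"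
  by (simp add: sw3_def)
lemma sw4_cong: "(\<And>a b c d. F a b c d = G a b c d) \<Longrightarrow> sw4 \<Delta> h F = sw4 \<Delta> h G"
  by (simp add: sw4_def)

context cchopf begin

lemma lin_sw3[linI]: "module sR \<Longrightarrow> (\<And>a b c. lin sX sR (\<lambda>x. F x a b c)) \<Longrightarrow> lin sX sR (\<lambda>x. sw3 \<Delta> h (F x))"
  unfolding sw3_def by (intro linI)

lemma sw3_left:
  assumes "module sR" "\<And>b c. lin sH sR (\<lambda>a. F a b c)" "\<And>a c. lin sH sR (\<lambda>b. F a b c)" "\<And>a b. lin sH sR (F a b)"
  shows "sw \<Delta> h (\<lambda>m c. sw \<Delta> m (\<lambda>a b. F a b c)) = sw3 \<Delta> h F"
  unfolding sw3_def by (rule sw_coassoc_eq) (use assms in auto)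

lemma sw3_swap12:
  assumes "module sR" "\<And>b c. lin sH sR (\<lambda>a. F a b c)" "\<And>a c. lin sH sR (\<lambda>b. F a b c)" "\<And>a b. lin sH sR (F a b)"
  shows "sw3 \<Delta> h F = sw3 \<Delta> h (\<lambda>a b c. F b a c)"
proof -
  have "sw3 \<Delta> h F = sw \<Delta> h (\<lambda>m c. sw \<Delta> m (\<lambda>a b. F a b c))"
    by (rule sw3_left[symmetric]) (use assms in auto)
  also have "\<dots> = sw \<Delta> h (\<lambda>m c. sw \<Delta> m (\<lambda>a b. F b a c))"
    by (intro sw_cong_eq sw_cocomm_eq) (use assms in auto)
  also have "\<dots> = sw3 \<Delta> h (\<lambda>a b c. F b a c)"
    by (rule sw3_left) (use assms in auto)
  finally show ?thesis .
qed

lemma sw3_swap23: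
  assumes "module sR" "\<And>b c. lin sH sR (\<lambda>a. F a b c)" "\<And>a c. lin sH sR (\<lambda>b. F a b c)" "\<And>a b. lin sH sR (F a b)"
  shows "sw3 \<Delta> h F = sw3 \<Delta> h (\<lambda>a b c. F a c b)"
  unfolding sw3_def by (intro sw_cong_eq sw_cocomm_eq) (use assms in auto)

lemma sw4_as3:
  "sw4 \<Delta> h F = sw3 \<Delta> h (\<lambda>a b y. sw \<Delta> y (\<lambda>c d. F a b c d))"
  by (simp add: sw4_def sw3_def)

lemma sw4_swap12:
  assumes "module sR" "\<And>b c d. lin sH sR (\<lambda>a. F a b c d)" "\<And>a c d. lin sH sR (\<lambda>b. F a b c d)"
    "\<And>a b d. lin sH sR (\<lambda>c. F a b c d)" "\<And>a b c. lin sH sR (F a b c)"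
  shows "sw4 \<Delta> h F = sw4 \<Delta> h (\<lambda>a b c d. F b a c d)"
  unfolding sw4_as3 by (rule sw3_swap12) (use assms in \<open>auto intro!: linI\<close>)

lemma sw4_swap23:
  assumes "module sR" "\<And>b c d. lin sH sR (\<lambda>a. F a b c d)" "\<And>a c d. lin sH sR (\<lambda>b. F a b c d)"
    "\<And>a b d. lin sH sR (\<lambda>c. F a b c d)" "\<And>a b c. lin sH sR (F a b c)"
  shows "sw4 \<Delta> h F = sw4 \<Delta> h (\<lambda>a b c d. F a c b d)"
  unfolding sw4_def by (intro sw_cong_eq sw3_swap12) (use assms in auto)

lemma sw4_swap34:
  assumes "module sR" "\<And>b c d. lin sH sR (\<lambda>a. F a b c d)" "\<And>a c d. lin sH sR (\<lambda>b. F a b c d)"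
    "\<And>a b d. lin sH sR (\<lambda>c. F a b c d)" "\<And>a b c. lin sH sR (F a b c)"
  shows "sw4 \<Delta> h F = sw4 \<Delta> h (\<lambda>a b c d. F a b d c)"
  unfolding sw4_def by (intro sw_cong_eq sw3_swap23) (use assms in auto)

lemma sw4_mid:
  assumes "module sR" "\<And>b c d. lin sH sR (\<lambda>a. F a b c d)" "\<And>a c d. lin sH sR (\<lambda>b. F a b c d)"
    "\<And>a b d. lin sH sR (\<lambda>c. F a b c d)" "\<And>a b c. lin sH sR (F a b c)"
  shows "sw3 \<Delta> h (\<lambda>a m d. sw \<Delta> m (\<lambda>b c. F a b c d)) = sw4 \<Delta> h F"
  unfolding sw4_def sw3_def by (intro sw_cong_eq sw3_left[unfolded sw3_def]) (use assms in auto)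

lemma sw4_first:
  assumes "module sR" "\<And>b c d. lin sH sR (\<lambda>a. F a b c d)" "\<And>a c d. lin sH sR (\<lambda>b. F a b c d)"
    "\<And>a b d. lin sH sR (\<lambda>c. F a b c d)" "\<And>a b c. lin sH sR (F a b c)"
  shows "sw3 \<Delta> h (\<lambda>m c d. sw \<Delta> m (\<lambda>a b. F a b c d)) = sw4 \<Delta> h F"
proof -
  have "sw3 \<Delta> h (\<lambda>m c d. sw \<Delta> m (\<lambda>a b. F a b c d)) = sw \<Delta> h (\<lambda>n d. sw \<Delta> n (\<lambda>m c. sw \<Delta> m (\<lambda>a b. F a b c d)))"
    by (rule sw3_left[symmetric]) (use assms in \<open>auto intro!: linI\<close>)
  also have "\<dots> = sw \<Delta> h (\<lambda>n d. sw3 \<Delta> n (\<lambda>a b c. F a b c d))"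
    by (intro sw_cong_eq sw3_left) (use assms in auto)
  also have "\<dots> = sw \<Delta> h (\<lambda>a x. sw \<Delta> x (\<lambda>b y. sw \<Delta> y (\<lambda>c d. F a b c d)))"
    unfolding sw3_def
  proof -
    have "sw \<Delta> h (\<lambda>n d. sw \<Delta> n (\<lambda>a x. sw \<Delta> x (\<lambda>b c. F a b c d))) = sw \<Delta> h (\<lambda>a x. sw \<Delta> x (\<lambda>y d. sw \<Delta> y (\<lambda>b c. F a b c d)))"
      by (rule sw_coassoc_eq) (use assms in \<open>auto intro!: linI\<close>)
    also have "\<dots> = sw \<Delta> h (\<lambda>a x. sw \<Delta> x (\<lambda>b y. sw \<Delta> y (\<lambda>c d. F a b c d)))"
      by (intro sw_cong_eq sw_coassoc_eq) (use assms in \<open>auto intro!: linI\<close>)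
    finally show "sw \<Delta> h (\<lambda>n d. sw \<Delta> n (\<lambda>a x. sw \<Delta> x (\<lambda>b c. F a b c d))) = sw \<Delta> h (\<lambda>a x. sw \<Delta> x (\<lambda>b y. sw \<Delta> y (\<lambda>c d. F a b c d)))" .
  qed
  finally show ?thesis by (simp add: sw4_def sw3_def)
qed

end

context cleft begin

lemma lin_t: "lin sH sA t" using t_lin by (simp add: HomHA_def lin_of_hom)
lemma lin_u: "lin sH sA u" using u_lin by (simp add: HomHA_def lin_of_hom)
lemma HomHA_lin: "f \<in> HomHA sH sA \<Longrightarrow> lin sH sA f" by (simp add: HomHA_def lin_of_hom)
lemma lin_HomHA: "lin sH sA f \<Longrightarrow> f \<in> HomHA sH sA"
  by (simp add: HomHA_def module_hom_iff lin_def modH modA)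

lemma conv_lin: "lin sH sA f \<Longrightarrow> lin sH sA g \<Longrightarrow> lin sH sA (conv \<Delta> f g)"
  unfolding conv_sw by (intro linI basicI2) (auto intro!: linI basicI2)

lemma conv_assoc:
  assumes "lin sH sA f" "lin sH sA g" "lin sH sA k"
  shows "conv \<Delta> (conv \<Delta> f g) k = conv \<Delta> f (conv \<Delta> g k)"
proof
  fix h
  have "conv \<Delta> (conv \<Delta> f g) k h = sw \<Delta> h (\<lambda>x y. sw \<Delta> x (\<lambda>a b. f a * g b * k y))"
    by (simp add: conv_sw sw_multc)
  also have "\<dots> = sw \<Delta> h (\<lambda>a z. sw \<Delta> z (\<lambda>b y. f a * g b * k y))"
    by (rule sw_coassoc_eq) (use assms in \<open>auto intro!: linI basicI2\<close>)
  also have "\<dots> = conv \<Delta> f (conv \<Delta> g k) h"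
    by (simp add: conv_sw sw_cmult mult.assoc)
  finally show "conv \<Delta> (conv \<Delta> f g) k h = conv \<Delta> f (conv \<Delta> g k) h" .
qed

lemma conv_unitL: "lin sH sA f \<Longrightarrow> conv \<Delta> (cunit sA \<epsilon>) f = f"
proof
  fix h assume f: "lin sH sA f"
  have "conv \<Delta> (cunit sA \<epsilon>) f h = sw \<Delta> h (\<lambda>a b. sA (\<epsilon> a) (f b))"
    by (simp add: conv_sw cunit_def k_alg_scale_mult1[OF kA])
  also have "\<dots> = f h" by (rule sw_counitL_eq) (use f in \<open>auto intro!: basicI2\<close>)
  finally show "conv \<Delta> (cunit sA \<epsilon>) f h = f h" .
qed

lemma conv_unitR: "lin sH sA f \<Longrightarrow> conv \<Delta> f (cunit sA \<epsilon>) = f"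
proof
  fix h assume f: "lin sH sA f"
  have "conv \<Delta> f (cunit sA \<epsilon>) h = sw \<Delta> h (\<lambda>a b. sA (\<epsilon> b) (f a))"
    by (simp add: conv_sw cunit_def k_alg_scale_mult2[OF kA])
  also have "\<dots> = f h" by (rule sw_counitR_eq) (use f in \<open>auto intro!: basicI2\<close>)
  finally show "conv \<Delta> f (cunit sA \<epsilon>) h = f h" .
qed

lemma lin_cunit: "lin sH sA (cunit sA \<epsilon>)"
  unfolding cunit_def by (rule lin_scal) (auto intro!: linI basicI2 lin_of_hom eps_lin)

lemma conv_inv_unique:
  assumes "lin sH sA f" "lin sH sA g" "lin sH sA g'"
    and "conv \<Delta> f g = cunit sA \<epsilon>" and "conv \<Delta> g' f = cunit sA \<epsilon>"
  shows "g' = g"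
proof -
  have "g' = conv \<Delta> g' (conv \<Delta> f g)" using assms by (simp add: conv_unitR)
  also have "\<dots> = conv \<Delta> (conv \<Delta> g' f) g" by (rule conv_assoc[symmetric]) (use assms in auto)
  also have "\<dots> = g" using assms by (simp add: conv_unitL)
  finally show ?thesis .
qed

end

context cleft begin

abbreviation "e \<equiv> cunit sA \<epsilon>"
abbreviation "Om \<equiv> OmegaA sH \<Delta> sA \<rho>"

lemma sw_S_eq: "module sR \<Longrightarrow> (\<And>n. lin sH sR (\<lambda>m. \<phi> m n)) \<Longrightarrow> (\<And>m. lin sH sR (\<phi> m)) \<Longrightarrow>
   sw \<Delta> (S h) \<phi> = sw \<Delta> h (\<lambda>a b. \<phi> (S a) (S b))"
  using sw_S_cc[OF submod_zero, of sR \<phi> h] by (simp add: bilm_zero_iff eqm_zero)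

lemma conv_S: "lin sH sA f \<Longrightarrow> lin sH sA g \<Longrightarrow> conv \<Delta> g f (S h) = conv \<Delta> (\<lambda>x. g (S x)) (\<lambda>x. f (S x)) h"
  unfolding conv_sw by (rule sw_S_eq) (auto intro!: linI basicI2)

lemma om_lin: "\<omega> \<in> Om \<Longrightarrow> lin sH sA \<omega>" by (simp add: OmegaA_def HomHA_lin)
lemma om_one: "\<omega> \<in> Om \<Longrightarrow> \<omega> 1 = 1" by (simp add: OmegaA_def)
lemma om_mult: "\<omega> \<in> Om \<Longrightarrow> \<omega> (x * y) = \<omega> x * \<omega> y" by (simp add: OmegaA_def)
lemma om_colin: "\<omega> \<in> Om \<Longrightarrow> colinear sA sH \<rho> \<Delta> \<omega>" by (simp add: OmegaA_def)
lemma om_S_lin: "\<omega> \<in> Om \<Longrightarrow> lin sH sA (\<lambda>h. \<omega> (S h))"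
proof -
  assume w: "\<omega> \<in> Om" show ?thesis by (rule lin_comp[OF om_lin[OF w] lin_S[OF lin_id]])
qed
lemma om_S_anticolin: "\<omega> \<in> Om \<Longrightarrow> anticolin (\<lambda>h. \<omega> (S h))"
  by (rule anticolin_S[OF om_lin om_colin])

lemma om_inv1: "\<omega> \<in> Om \<Longrightarrow> conv \<Delta> \<omega> (\<lambda>h. \<omega> (S h)) = e"
proof
  fix h assume w: "\<omega> \<in> Om"
  have "conv \<Delta> \<omega> (\<lambda>h. \<omega> (S h)) h = sw \<Delta> h (\<lambda>a b. \<omega> (a * S b))" by (simp add: conv_sw om_mult[OF w])
  also have "\<dots> = sA (\<epsilon> h) (\<omega> 1)" by (rule sw_antipR_eq) (auto intro!: basicI2 om_lin[OF w])
  finally show "conv \<Delta> \<omega> (\<lambda>h. \<omega> (S h)) h = e h" by (simp add: om_one[OF w] cunit_def)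
qed

lemma om_inv2: "\<omega> \<in> Om \<Longrightarrow> conv \<Delta> (\<lambda>h. \<omega> (S h)) \<omega> = e"
proof
  fix h assume w: "\<omega> \<in> Om"
  have "conv \<Delta> (\<lambda>h. \<omega> (S h)) \<omega> h = sw \<Delta> h (\<lambda>a b. \<omega> (S a * b))" by (simp add: conv_sw om_mult[OF w])
  also have "\<dots> = sA (\<epsilon> h) (\<omega> 1)" by (rule sw_antipL_eq) (auto intro!: basicI2 om_lin[OF w])
  finally show "conv \<Delta> (\<lambda>h. \<omega> (S h)) \<omega> h = e h" by (simp add: om_one[OF w] cunit_def)
qed

lemma act_sw: "act \<Delta> t u h b = sw \<Delta> h (\<lambda>x y. t x * b * u y)"
  by (simp add: act_def sw_def)

lemma act_lin_b[linI]: "lin sX sA g \<Longrightarrow> lin sX sA (\<lambda>x. act \<Delta> t u h (g x))"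
  unfolding act_sw by (intro linI basicI2) (auto intro!: linI basicI2)

lemma act_lin_h[linI]: "lin sX sH g \<Longrightarrow> lin sX sA (\<lambda>x. act \<Delta> t u (g x) b)"
  unfolding act_sw by (intro linI basicI2) (auto intro!: linI basicI2 lin_t lin_u)

lemma act_one: "act \<Delta> t u h 1 = e h"
  using tu by (simp add: act_sw conv_sw fun_eq_iff)

lemma act_mult: "act \<Delta> t u h (a * b) = sw \<Delta> h (\<lambda>x y. act \<Delta> t u x a * act \<Delta> t u y b)"
proof -
  have "sw \<Delta> h (\<lambda>x y. act \<Delta> t u x a * act \<Delta> t u y b) = sw \<Delta> h (\<lambda>x y. sw \<Delta> x (\<lambda>p q. sw \<Delta> y (\<lambda>r s. t p * a * u q * (t r * b * u s))))"
    by (simp add: act_sw sw_multc sw_cmult) (intro sw_cong_eq; rule sw_swap)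
  also have "\<dots> = sw \<Delta> h (\<lambda>p z. sw \<Delta> z (\<lambda>q y. sw \<Delta> y (\<lambda>r s. t p * a * u q * (t r * b * u s))))"
    by (rule sw_coassoc_eq) (auto intro!: linI basicI2 lin_t lin_u)
  also have "\<dots> = sw \<Delta> h (\<lambda>p z. sw \<Delta> z (\<lambda>m s. sw \<Delta> m (\<lambda>q r. t p * a * (u q * t r) * b * u s)))"
  proof (rule sw_cong_eq)
    fix p z
    have "sw \<Delta> z (\<lambda>q y. sw \<Delta> y (\<lambda>r s. t p * a * u q * (t r * b * u s))) = sw \<Delta> z (\<lambda>m s. sw \<Delta> m (\<lambda>q r. t p * a * u q * (t r * b * u s)))"
      by (rule sw_coassoc_eq[symmetric]) (auto intro!: linI basicI2 lin_t lin_u)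
    then show "sw \<Delta> z (\<lambda>q y. sw \<Delta> y (\<lambda>r s. t p * a * u q * (t r * b * u s))) = sw \<Delta> z (\<lambda>m s. sw \<Delta> m (\<lambda>q r. t p * a * (u q * t r) * b * u s))"
      by (simp add: mult.assoc)
  qed
  also have "\<dots> = sw \<Delta> h (\<lambda>p z. sw \<Delta> z (\<lambda>m s. t p * a * conv \<Delta> u t m * b * u s))"
    by (simp add: conv_sw sw_cmult sw_multc)
  also have "\<dots> = sw \<Delta> h (\<lambda>p z. sw \<Delta> z (\<lambda>m s. sA (\<epsilon> m) (t p * a * b * u s)))"
    by (simp add: ut cunit_def k_alg_scaleL[OF kA] k_alg_scaleR[OF kA] mult.assoc)
  also have "\<dots> = sw \<Delta> h (\<lambda>p z. t p * a * b * u z)"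
    by (intro sw_cong_eq sw_counitL_eq) (auto intro!: linI basicI2 lin_t lin_u)
  also have "\<dots> = act \<Delta> t u h (a * b)" by (simp add: act_sw mult.assoc)
  finally show ?thesis ..
qed

lemma gamma_B: "\<omega> \<in> Om \<Longrightarrow> conv \<Delta> (\<lambda>h. \<omega> (S h)) t h \<in> B"
  by (rule L1b[OF om_S_lin om_S_anticolin lin_t t_colin])

lemma act_indep:
  assumes w: "\<omega> \<in> Om" and b: "b \<in> B"
  shows "act \<Delta> t u h b = sw \<Delta> h (\<lambda>x y. \<omega> x * b * \<omega> (S y))"
proof -
  let ?g = "conv \<Delta> (\<lambda>h. \<omega> (S h)) t"
  have lg: "lin sH sA ?g" by (intro conv_lin om_S_lin[OF w] lin_t)
  have t_eq: "t = conv \<Delta> \<omega> ?g"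
    using conv_assoc[OF om_lin[OF w] om_S_lin[OF w] lin_t] om_inv1[OF w] conv_unitL[OF lin_t] by simp
  have gu: "conv \<Delta> ?g u = (\<lambda>h. \<omega> (S h))"
    using conv_assoc[OF om_S_lin[OF w] lin_t lin_u] tu conv_unitR[OF om_S_lin[OF w]] by simp
  have tx: "\<And>x. t x = sw \<Delta> x (\<lambda>p q. \<omega> p * ?g q)" using t_eq conv_sw by metis
  have "act \<Delta> t u h b = sw \<Delta> h (\<lambda>x y. sw \<Delta> x (\<lambda>p q. \<omega> p * ?g q) * b * u y)"
    unfolding act_sw by (intro sw_cong_eq) (simp only: tx)
  also have "\<dots> = sw \<Delta> h (\<lambda>x y. sw \<Delta> x (\<lambda>p q. \<omega> p * ?g q * b * u y))"
    by (simp only: sw_multc)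
  also have "\<dots> = sw \<Delta> h (\<lambda>p z. sw \<Delta> z (\<lambda>q y. \<omega> p * ?g q * b * u y))"
    by (rule sw_coassoc_eq) (auto intro!: linI basicI2 lin_t lin_u lg om_lin[OF w])
  also have "\<dots> = sw \<Delta> h (\<lambda>p z. sw \<Delta> z (\<lambda>q y. \<omega> p * b * (?g q * u y)))"
  proof (intro sw_cong_eq)
    fix p z q y
    have "?g q * b = b * ?g q" using Bcomm gamma_B[OF w] b by blast
    then show "\<omega> p * ?g q * b * u y = \<omega> p * b * (?g q * u y)" by (simp add: mult.assoc)
  qed
  also have "\<dots> = sw \<Delta> h (\<lambda>p z. \<omega> p * b * \<omega> (S z))"
  proof (intro sw_cong_eq)
    fix p z
    have "sw \<Delta> z (\<lambda>q y. ?g q * u y) = \<omega> (S z)" using gu conv_sw by metis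
    then show "sw \<Delta> z (\<lambda>q y. \<omega> p * b * (?g q * u y)) = \<omega> p * b * \<omega> (S z)"
      by (simp add: sw_cmult[symmetric])
  qed
  finally show ?thesis .
qed

lemma act_B: "\<omega> \<in> Om \<Longrightarrow> b \<in> B \<Longrightarrow> act \<Delta> t u h b \<in> B"
proof -
  assume w: "\<omega> \<in> Om" and b: "b \<in> B"
  have ac: "anticolin (\<lambda>y. b * \<omega> (S y))"
    unfolding anticolin_def teq2_eqm
  proof
    fix h
    have "eqm RT (fsum (\<rho> (b * \<omega> (S h)))) (fsum (tmult [(b, 1)] (map (\<lambda>(x, y). (\<omega> (S y), S x)) (\<Delta> h))))"
      by (rule rho_prod) (use b om_S_anticolin[OF w] in \<open>auto simp: coinv_eqm anticolin_def teq2_eqm\<close>)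
    then show "eqm RT (fsum (\<rho> (b * \<omega> (S h)))) (fsum (map (\<lambda>(x, y). (b * \<omega> (S y), S x)) (\<Delta> h)))"
      by (simp add: tmult_def o_def case_prod_beta')
  qed
  have "conv \<Delta> \<omega> (\<lambda>y. b * \<omega> (S y)) h \<in> B"
    by (rule L1a[OF om_lin[OF w] om_colin[OF w] _ ac]) (intro linI basicI2 om_S_lin[OF w])
  then show ?thesis using act_indep[OF w b, of h] by (simp add: conv_sw mult.assoc)
qed

end

lemma lin_sw_commute: "lin sX sR f \<Longrightarrow> f (sw \<Delta> h \<phi>) = sw \<Delta> h (\<lambda>a b. f (\<phi> a b))"
proof -
  assume f: "lin sX sR f"
  have "f (sum_list (map g xs)) = sum_list (map (\<lambda>x. f (g x)) xs)" for g and xs :: "'z list"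
  proof (induction xs)
    case Nil
    have "f (0 + 0) = f 0 + f 0" using f unfolding lin_def by blast
    then have "f 0 = 0" by simp
    then show ?case by simp
  next
    case (Cons a xs) then show ?case using f by (simp add: lin_def)
  qed
  then show ?thesis unfolding sw_def by (simp add: case_prod_beta')
qed

context cleft begin

abbreviation "Zc \<equiv> Z1 sH \<Delta> \<epsilon> sA \<rho> t u"
abbreviation "HB \<equiv> HomHB sH sA \<rho>"

lemma HB_lin: "f \<in> HB \<Longrightarrow> lin sH sA f" by (simp add: HomHB_def HomHA_lin)
lemma HB_B: "f \<in> HB \<Longrightarrow> f h \<in> B" by (simp add: HomHB_def)
lemma HB_I: "lin sH sA f \<Longrightarrow> (\<And>h. f h \<in> B) \<Longrightarrow> f \<in> HB" by (simp add: HomHB_def lin_HomHA)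

lemma Z_HB: "v \<in> Zc \<Longrightarrow> v \<in> HB" by (simp add: Z1_def)
lemma Z_lin: "v \<in> Zc \<Longrightarrow> lin sH sA v" by (simp add: Z1_def HB_lin)
lemma Z_B: "v \<in> Zc \<Longrightarrow> v h \<in> B" by (simp add: Z1_def HB_B)
lemma Z_inv: "v \<in> Zc \<Longrightarrow> \<exists>w \<in> HB. conv \<Delta> v w = e \<and> conv \<Delta> w v = e" by (simp add: Z1_def)
lemma Z_cocycle: "v \<in> Zc \<Longrightarrow> v (h * k) = sw \<Delta> h (\<lambda>x y. act \<Delta> t u x (v k) * v y)"
  by (simp add: Z1_def sw_def)
lemma Z_I: "lin sH sA v \<Longrightarrow> (\<And>h. v h \<in> B) \<Longrightarrow> w \<in> HB \<Longrightarrow> conv \<Delta> v w = e \<Longrightarrow> conv \<Delta> w v = e \<Longrightarrow>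
   (\<And>h k. v (h * k) = sw \<Delta> h (\<lambda>x y. act \<Delta> t u x (v k) * v y)) \<Longrightarrow> v \<in> Zc"
  unfolding Z1_def by (auto simp: sw_def intro!: HB_I)

lemma conv_one: "lin sH sA f \<Longrightarrow> lin sH sA g \<Longrightarrow> conv \<Delta> f g 1 = f 1 * g 1"
  unfolding conv_sw by (rule sw_one_eq) (auto intro!: linI basicI2)

lemma e_one: "e 1 = 1" by (simp add: cunit_def eps_one module.scale_one[OF modA])

lemma tu1: "t 1 * u 1 = 1" using conv_one[OF lin_t lin_u] tu e_one by simp
lemma ut1: "u 1 * t 1 = 1" using conv_one[OF lin_u lin_t] ut e_one by simp

lemma act1: "act \<Delta> t u 1 b = t 1 * b * u 1"
  unfolding act_sw by (rule sw_one_eq) (auto intro!: linI basicI2 lin_t lin_u)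

lemma Z_one: assumes v: "v \<in> Zc" shows "v 1 = 1"
proof -
  obtain w where w: "w \<in> HB" "conv \<Delta> v w = e" using Z_inv[OF v] by blast
  have vw: "v 1 * w 1 = 1" using conv_one[OF Z_lin[OF v] HB_lin[OF w(1)]] w(2) e_one by simp
  have "v 1 = v (1 * 1)" by simp
  also have "\<dots> = act \<Delta> t u 1 (v 1) * v 1"
    unfolding Z_cocycle[OF v] by (rule sw_one_eq) (auto intro!: linI basicI2 Z_lin[OF v])
  finally have "v 1 = t 1 * v 1 * u 1 * v 1" by (simp add: act1)
  then have "v 1 * w 1 = t 1 * v 1 * u 1 * v 1 * w 1" by (metis arg_cong[of _ _ "\<lambda>x. x * w 1"])
  then have "v 1 * w 1 = t 1 * v 1 * u 1 * (v 1 * w 1)" by (simp add: mult.assoc)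
  then have "1 = t 1 * v 1 * u 1" using vw by simp
  then have "u 1 * 1 * t 1 = u 1 * (t 1 * v 1 * u 1) * t 1" by simp
  then show ?thesis using tu1 ut1 by (simp add: mult.assoc) (metis mult.assoc mult_1_left)
qed

lemma sw4_pairs:
  assumes "module sR" "\<And>b c d. lin sH sR (\<lambda>a. F a b c d)" "\<And>a c d. lin sH sR (\<lambda>b. F a b c d)"
    "\<And>a b d. lin sH sR (\<lambda>c. F a b c d)" "\<And>a b c. lin sH sR (F a b c)"
  shows "sw \<Delta> h (\<lambda>x y. sw \<Delta> x (\<lambda>p q. sw \<Delta> y (\<lambda>r s. F p q r s))) = sw4 \<Delta> h F"
  unfolding sw4_def sw3_def by (rule sw_coassoc_eq) (use assms in \<open>auto intro!: linI\<close>)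

lemma act_sw_b: "act \<Delta> t u x (sw \<Delta> k \<phi>) = sw \<Delta> k (\<lambda>a b. act \<Delta> t u x (\<phi> a b))"
  by (rule lin_sw_commute[of sA sA]) (intro linI)

lemma Z_conv:
  assumes v: "v \<in> Zc" and w: "w \<in> Zc"
  shows "conv \<Delta> v w \<in> Zc"
proof -
  note lv = Z_lin[OF v] and lw = Z_lin[OF w]
  obtain v' where v': "v' \<in> HB" "conv \<Delta> v v' = e" "conv \<Delta> v' v = e" using Z_inv[OF v] by blast
  obtain w' where w': "w' \<in> HB" "conv \<Delta> w w' = e" "conv \<Delta> w' w = e" using Z_inv[OF w] by blast
  note lv' = HB_lin[OF v'(1)] and lw' = HB_lin[OF w'(1)]
  show ?thesis
  proof (rule Z_I[where w="conv \<Delta> w' v'"])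
    show "lin sH sA (conv \<Delta> v w)" by (rule conv_lin[OF lv lw])
    show "conv \<Delta> v w h \<in> B" for h by (rule conv_B[OF Z_B[OF v] Z_B[OF w]])
    show "conv \<Delta> w' v' \<in> HB" by (rule HB_I[OF conv_lin[OF lw' lv'] conv_B[OF HB_B[OF w'(1)] HB_B[OF v'(1)]]])
    show "conv \<Delta> (conv \<Delta> v w) (conv \<Delta> w' v') = e"
    proof -
      have "conv \<Delta> (conv \<Delta> v w) (conv \<Delta> w' v') = conv \<Delta> v (conv \<Delta> w (conv \<Delta> w' v'))"
        by (rule conv_assoc[OF lv lw conv_lin[OF lw' lv']])
      also have "conv \<Delta> w (conv \<Delta> w' v') = conv \<Delta> (conv \<Delta> w w') v'"
        by (rule conv_assoc[OF lw lw' lv', symmetric])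
      finally show ?thesis using w'(2) conv_unitL[OF lv'] v'(2) by simp
    qed
    show "conv \<Delta> (conv \<Delta> w' v') (conv \<Delta> v w) = e"
    proof -
      have "conv \<Delta> (conv \<Delta> w' v') (conv \<Delta> v w) = conv \<Delta> w' (conv \<Delta> v' (conv \<Delta> v w))"
        by (rule conv_assoc[OF lw' lv' conv_lin[OF lv lw]])
      also have "conv \<Delta> v' (conv \<Delta> v w) = conv \<Delta> (conv \<Delta> v' v) w"
        by (rule conv_assoc[OF lv' lv lw, symmetric])
      finally show ?thesis using w'(3) conv_unitL[OF lw] v'(3) by simp
    qed
  next
    fix h k
    have BC: "\<And>a b. a \<in> B \<Longrightarrow> b \<in> B \<Longrightarrow> a * b = b * a" using Bcomm by blast
    have "conv \<Delta> v w (h * k) = sw \<Delta> h (\<lambda>h1 h2. sw \<Delta> k (\<lambda>k1 k2. v (h1 * k1) * w (h2 * k2)))"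
      unfolding conv_sw by (rule sw_mult_eq) (auto intro!: linI basicI2 lv lw lin_comp[OF lv] lin_comp[OF lw])
    also have "\<dots> = sw \<Delta> h (\<lambda>h1 h2. sw \<Delta> k (\<lambda>k1 k2. sw \<Delta> h1 (\<lambda>p q. act \<Delta> t u p (v k1) * v q * w (h2 * k2))))"
      by (simp add: Z_cocycle[OF v] sw_multc)
    also have "\<dots> = sw \<Delta> k (\<lambda>k1 k2. sw \<Delta> h (\<lambda>h1 h2. sw \<Delta> h1 (\<lambda>p q. act \<Delta> t u p (v k1) * v q * w (h2 * k2))))"
      by (rule sw_swap)
    also have "\<dots> = sw \<Delta> k (\<lambda>k1 k2. sw3 \<Delta> h (\<lambda>p q r. act \<Delta> t u p (v k1) * v q * w (r * k2)))"
      by (intro sw_cong_eq sw3_left) (auto intro!: linI basicI2 lv lw lin_comp[OF lv] lin_comp[OF lw])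
    also have "\<dots> = sw \<Delta> k (\<lambda>k1 k2. sw3 \<Delta> h (\<lambda>p q r. act \<Delta> t u p (v k1) * v r * w (q * k2)))"
      by (intro sw_cong_eq sw3_swap23) (auto intro!: linI basicI2 lv lw lin_comp[OF lv] lin_comp[OF lw])
    also have "\<dots> = sw \<Delta> k (\<lambda>k1 k2. sw3 \<Delta> h (\<lambda>p q r. act \<Delta> t u p (v k1) * w (q * k2) * v r))"
      by (intro sw_cong_eq sw3_cong) (simp add: mult.assoc BC[OF Z_B[OF v] Z_B[OF w]])
    finally have L: "conv \<Delta> v w (h * k) = sw \<Delta> k (\<lambda>k1 k2. sw3 \<Delta> h (\<lambda>p q r. act \<Delta> t u p (v k1) * w (q * k2) * v r))" .
    have "sw \<Delta> h (\<lambda>x y. act \<Delta> t u x (conv \<Delta> v w k) * conv \<Delta> v w y)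
        = sw \<Delta> h (\<lambda>x y. sw \<Delta> k (\<lambda>k1 k2. sw \<Delta> x (\<lambda>p q. act \<Delta> t u p (v k1) * act \<Delta> t u q (w k2))) * sw \<Delta> y (\<lambda>r s. v r * w s))"
      by (simp add: conv_sw act_sw_b act_mult)
    also have "\<dots> = sw \<Delta> h (\<lambda>x y. sw \<Delta> k (\<lambda>k1 k2. sw \<Delta> x (\<lambda>p q. sw \<Delta> y (\<lambda>r s. act \<Delta> t u p (v k1) * act \<Delta> t u q (w k2) * (v r * w s)))))"
      by (simp only: sw_multc, simp only: sw_cmult)
    also have "\<dots> = sw \<Delta> k (\<lambda>k1 k2. sw \<Delta> h (\<lambda>x y. sw \<Delta> x (\<lambda>p q. sw \<Delta> y (\<lambda>r s. act \<Delta> t u p (v k1) * act \<Delta> t u q (w k2) * (v r * w s)))))"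
      by (rule sw_swap)
    also have "\<dots> = sw \<Delta> k (\<lambda>k1 k2. sw4 \<Delta> h (\<lambda>p q r s. act \<Delta> t u p (v k1) * act \<Delta> t u q (w k2) * (v r * w s)))"
      by (intro sw_cong_eq sw4_pairs) (auto intro!: linI basicI2 lv lw lin_comp[OF lv] lin_comp[OF lw])
    also have "\<dots> = sw \<Delta> k (\<lambda>k1 k2. sw4 \<Delta> h (\<lambda>p q r s. act \<Delta> t u p (v k1) * act \<Delta> t u q (w k2) * (w s * v r)))"
      by (intro sw_cong_eq sw4_cong) (simp add: BC[OF Z_B[OF v] Z_B[OF w]])
    also have "\<dots> = sw \<Delta> k (\<lambda>k1 k2. sw4 \<Delta> h (\<lambda>p q r s. act \<Delta> t u p (v k1) * act \<Delta> t u q (w k2) * (w r * v s)))"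
      by (intro sw_cong_eq sw4_swap34) (auto intro!: linI basicI2 lv lw lin_comp[OF lv] lin_comp[OF lw])
    also have "\<dots> = sw \<Delta> k (\<lambda>k1 k2. sw3 \<Delta> h (\<lambda>p m s. sw \<Delta> m (\<lambda>q r. act \<Delta> t u p (v k1) * act \<Delta> t u q (w k2) * (w r * v s))))"
      by (intro sw_cong_eq sw4_mid[symmetric]) (auto intro!: linI basicI2 lv lw lin_comp[OF lv] lin_comp[OF lw])
    also have "\<dots> = sw \<Delta> k (\<lambda>k1 k2. sw3 \<Delta> h (\<lambda>p m s. act \<Delta> t u p (v k1) * w (m * k2) * v s))"
    proof (intro sw_cong_eq sw3_cong)
      fix k1 k2 p m s
      have "sw \<Delta> m (\<lambda>q r. act \<Delta> t u p (v k1) * act \<Delta> t u q (w k2) * (w r * v s))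
         = act \<Delta> t u p (v k1) * sw \<Delta> m (\<lambda>q r. act \<Delta> t u q (w k2) * w r) * v s"
        by (simp add: sw_multc sw_cmult mult.assoc)
      then show "sw \<Delta> m (\<lambda>q r. act \<Delta> t u p (v k1) * act \<Delta> t u q (w k2) * (w r * v s))
         = act \<Delta> t u p (v k1) * w (m * k2) * v s" by (simp add: Z_cocycle[OF w])
    qed
    finally show "conv \<Delta> v w (h * k) = sw \<Delta> h (\<lambda>x y. act \<Delta> t u x (conv \<Delta> v w k) * conv \<Delta> v w y)"
      using L by simp
  qed
qed

end

context cleft begin

lemma commut1:
  assumes w: "\<omega> \<in> Om" and b: "b \<in> B"
  shows "sw \<Delta> h (\<lambda>x y. act \<Delta> t u x b * \<omega> y) = \<omega> h * b"
proof -
  note lw = om_lin[OF w] and lws = om_S_lin[OF w]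
  have "sw \<Delta> h (\<lambda>x y. act \<Delta> t u x b * \<omega> y) = sw \<Delta> h (\<lambda>x y. sw \<Delta> x (\<lambda>p q. \<omega> p * b * \<omega> (S q) * \<omega> y))"
    by (simp add: act_indep[OF w b] sw_multc)
  also have "\<dots> = sw3 \<Delta> h (\<lambda>p q y. \<omega> p * b * \<omega> (S q) * \<omega> y)"
    by (rule sw3_left) (auto intro!: linI basicI2 lw lws lin_comp[OF lw])
  also have "\<dots> = sw \<Delta> h (\<lambda>p z. \<omega> p * b * conv \<Delta> (\<lambda>h. \<omega> (S h)) \<omega> z)"
    by (simp add: sw3_def conv_sw sw_cmult mult.assoc)
  also have "\<dots> = sw \<Delta> h (\<lambda>p z. sA (\<epsilon> z) (\<omega> p * b))"
    by (simp add: om_inv2[OF w] cunit_def k_alg_scale_mult2[OF kA])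
  also have "\<dots> = \<omega> h * b"
    by (rule sw_counitR_eq[where sR=sA]) (auto intro!: linI basicI2 lw)
  finally show ?thesis .
qed

lemma commut2:
  assumes w: "\<omega> \<in> Om" and b: "b \<in> B"
  shows "b * \<omega> k = sw \<Delta> k (\<lambda>x y. \<omega> x * act \<Delta> t u (S y) b)"
proof -
  note lw = om_lin[OF w] and lws = om_S_lin[OF w]
  have "sw \<Delta> k (\<lambda>x y. \<omega> x * act \<Delta> t u (S y) b) = sw \<Delta> k (\<lambda>x y. \<omega> x * sw \<Delta> (S y) (\<lambda>p q. \<omega> p * b * \<omega> (S q)))"
    by (simp add: act_indep[OF w b])
  also have "\<dots> = sw \<Delta> k (\<lambda>x y. \<omega> x * sw \<Delta> y (\<lambda>p q. \<omega> (S p) * b * \<omega> (S (S q))))"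
    by (intro sw_cong_eq arg_cong[where f="\<lambda>z. _ * z"] sw_S_eq) (auto intro!: linI basicI2 lw lws lin_comp[OF lw])
  also have "\<dots> = sw3 \<Delta> k (\<lambda>x p q. \<omega> x * \<omega> (S p) * b * \<omega> q)"
    by (simp add: sw3_def sw_cmult S_S mult.assoc)
  also have "\<dots> = sw \<Delta> k (\<lambda>m q. sw \<Delta> m (\<lambda>x p. \<omega> x * \<omega> (S p) * b * \<omega> q))"
    by (rule sw3_left[symmetric]) (auto intro!: linI basicI2 lw lws lin_comp[OF lw])
  also have "\<dots> = sw \<Delta> k (\<lambda>m q. conv \<Delta> \<omega> (\<lambda>h. \<omega> (S h)) m * (b * \<omega> q))"
    by (simp add: conv_sw sw_multc mult.assoc)
  also have "\<dots> = sw \<Delta> k (\<lambda>m q. sA (\<epsilon> m) (b * \<omega> q))"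
    by (simp add: om_inv1[OF w] cunit_def k_alg_scale_mult1[OF kA])
  also have "\<dots> = b * \<omega> k"
    by (rule sw_counitL_eq[where sR=sA]) (auto intro!: linI basicI2 lw)
  finally show ?thesis ..
qed

lemma J:
  assumes v: "v \<in> Zc" and w: "\<omega> \<in> Om"
  shows "conv \<Delta> v \<omega> \<in> Om"
proof -
  note lv = Z_lin[OF v] and lw = om_lin[OF w]
  have BC: "\<And>a b. a \<in> B \<Longrightarrow> b \<in> B \<Longrightarrow> a * b = b * a" using Bcomm by blast
  have mult: "conv \<Delta> v \<omega> (h * k) = conv \<Delta> v \<omega> h * conv \<Delta> v \<omega> k" for h k
  proof -
    have "conv \<Delta> v \<omega> (h * k) = sw \<Delta> h (\<lambda>h1 h2. sw \<Delta> k (\<lambda>k1 k2. v (h1 * k1) * \<omega> (h2 * k2)))"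
      unfolding conv_sw by (rule sw_mult_eq) (auto intro!: linI basicI2 lv lw)
    also have "\<dots> = sw \<Delta> h (\<lambda>h1 h2. sw \<Delta> k (\<lambda>k1 k2. sw \<Delta> h1 (\<lambda>p q. act \<Delta> t u p (v k1) * v q * (\<omega> h2 * \<omega> k2))))"
      by (simp add: Z_cocycle[OF v] om_mult[OF w] sw_multc)
    also have "\<dots> = sw \<Delta> k (\<lambda>k1 k2. sw \<Delta> h (\<lambda>h1 h2. sw \<Delta> h1 (\<lambda>p q. act \<Delta> t u p (v k1) * v q * (\<omega> h2 * \<omega> k2))))"
      by (rule sw_swap)
    also have "\<dots> = sw \<Delta> k (\<lambda>k1 k2. sw3 \<Delta> h (\<lambda>p q r. act \<Delta> t u p (v k1) * v q * (\<omega> r * \<omega> k2)))"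
      by (intro sw_cong_eq sw3_left) (auto intro!: linI basicI2 lv lw)
    finally have L: "conv \<Delta> v \<omega> (h * k) = sw \<Delta> k (\<lambda>k1 k2. sw3 \<Delta> h (\<lambda>p q r. act \<Delta> t u p (v k1) * v q * (\<omega> r * \<omega> k2)))" .
    have "conv \<Delta> v \<omega> h * conv \<Delta> v \<omega> k = sw \<Delta> k (\<lambda>k1 k2. sw \<Delta> h (\<lambda>h1 h2. v h1 * \<omega> h2 * (v k1 * \<omega> k2)))"
      unfolding conv_sw by (simp only: sw_cmult, simp only: sw_multc)
    also have "\<dots> = sw \<Delta> k (\<lambda>k1 k2. sw \<Delta> h (\<lambda>h1 h2. v h1 * sw \<Delta> h2 (\<lambda>a b. act \<Delta> t u a (v k1) * \<omega> b) * \<omega> k2))"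
      by (simp add: commut1[OF w Z_B[OF v]] mult.assoc)
    also have "\<dots> = sw \<Delta> k (\<lambda>k1 k2. sw3 \<Delta> h (\<lambda>h1 a b. v h1 * act \<Delta> t u a (v k1) * \<omega> b * \<omega> k2))"
      by (simp add: sw3_def sw_multc sw_cmult mult.assoc)
    also have "\<dots> = sw \<Delta> k (\<lambda>k1 k2. sw3 \<Delta> h (\<lambda>h1 a b. act \<Delta> t u a (v k1) * v h1 * \<omega> b * \<omega> k2))"
      by (intro sw_cong_eq sw3_cong) (simp add: BC[OF Z_B[OF v] act_B[OF w Z_B[OF v]]])
    also have "\<dots> = sw \<Delta> k (\<lambda>k1 k2. sw3 \<Delta> h (\<lambda>p q r. act \<Delta> t u p (v k1) * v q * \<omega> r * \<omega> k2))"
      by (intro sw_cong_eq sw3_swap12) (auto intro!: linI basicI2 lv lw)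
    finally show ?thesis using L by (simp add: mult.assoc)
  qed
  show ?thesis unfolding OmegaA_def
    by (auto intro!: lin_HomHA conv_lin lv lw mult Td1[OF lv Z_B[OF v] lw om_colin[OF w]]
        simp: conv_one[OF lv lw] Z_one[OF v] om_one[OF w])
qed

end

context cleft begin

lemma K:
  assumes z: "z \<in> Zc" and w: "\<omega> \<in> Om"
  shows "conv \<Delta> \<omega> (\<lambda>h. z (S h)) \<in> Om"
proof -
  note lz = Z_lin[OF z] and lw = om_lin[OF w]
  have lzs: "lin sH sA (\<lambda>h. z (S h))" by (rule lin_comp[OF lz lin_S[OF lin_id]])
  have mult: "conv \<Delta> \<omega> (\<lambda>h. z (S h)) (h * k) = conv \<Delta> \<omega> (\<lambda>h. z (S h)) h * conv \<Delta> \<omega> (\<lambda>h. z (S h)) k" for h k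
  proof -
    have inner: "sw \<Delta> n (\<lambda>y k2. act \<Delta> t u (S y) (z (S h2)) * z (S k2)) = z (S (h2 * n))" for n h2
    proof -
      have "sw \<Delta> n (\<lambda>y k2. act \<Delta> t u (S y) (z (S h2)) * z (S k2)) = sw \<Delta> (S n) (\<lambda>a b. act \<Delta> t u a (z (S h2)) * z b)"
        by (rule sw_S_eq[symmetric]) (auto intro!: linI basicI2 lz)
      also have "\<dots> = z (S n * S h2)" by (simp add: Z_cocycle[OF z])
      finally show ?thesis by (simp add: S_mult)
    qed
    have "conv \<Delta> \<omega> (\<lambda>h. z (S h)) h * conv \<Delta> \<omega> (\<lambda>h. z (S h)) k
        = sw \<Delta> k (\<lambda>k1 k2. sw \<Delta> h (\<lambda>h1 h2. \<omega> h1 * z (S h2) * (\<omega> k1 * z (S k2))))"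
      unfolding conv_sw by (simp only: sw_cmult, simp only: sw_multc)
    also have "\<dots> = sw \<Delta> h (\<lambda>h1 h2. sw \<Delta> k (\<lambda>k1 k2. \<omega> h1 * (z (S h2) * \<omega> k1) * z (S k2)))"
      by (subst sw_swap) (simp add: mult.assoc)
    also have "\<dots> = sw \<Delta> h (\<lambda>h1 h2. sw \<Delta> k (\<lambda>k1 k2. sw \<Delta> k1 (\<lambda>x y. \<omega> h1 * \<omega> x * act \<Delta> t u (S y) (z (S h2)) * z (S k2))))"
      by (simp add: commut2[OF w Z_B[OF z]] sw_multc sw_cmult mult.assoc)
    also have "\<dots> = sw \<Delta> h (\<lambda>h1 h2. sw3 \<Delta> k (\<lambda>x y k2. \<omega> h1 * \<omega> x * act \<Delta> t u (S y) (z (S h2)) * z (S k2)))"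
      by (intro sw_cong_eq sw3_left) (auto intro!: linI basicI2 lz lw lin_comp[OF lz] lin_comp[OF lw])
    also have "\<dots> = sw \<Delta> h (\<lambda>h1 h2. sw \<Delta> k (\<lambda>x n. \<omega> h1 * \<omega> x * sw \<Delta> n (\<lambda>y k2. act \<Delta> t u (S y) (z (S h2)) * z (S k2))))"
      by (simp add: sw3_def sw_cmult mult.assoc)
    also have "\<dots> = sw \<Delta> h (\<lambda>h1 h2. sw \<Delta> k (\<lambda>x n. \<omega> (h1 * x) * z (S (h2 * n))))"
      by (simp add: inner om_mult[OF w])
    also have "\<dots> = conv \<Delta> \<omega> (\<lambda>h. z (S h)) (h * k)"
      unfolding conv_sw by (rule sw_mult_eq[symmetric]) (auto intro!: linI basicI2 lz lw lin_comp[OF lz])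
    finally show ?thesis ..
  qed
  have B': "\<And>h. z (S h) \<in> B" by (rule Z_B[OF z])
  show ?thesis unfolding OmegaA_def
    by (auto intro!: lin_HomHA conv_lin lzs lw mult Td2[OF lzs B' lw om_colin[OF w]]
        simp: conv_one[OF lw lzs] S_one Z_one[OF z] om_one[OF w])
qed

lemma I:
  assumes w: "\<omega> \<in> Om" and w': "\<omega>' \<in> Om"
  shows "conv \<Delta> \<omega> (\<lambda>h. \<omega>' (S h)) \<in> Zc"
proof -
  note lw = om_lin[OF w] and lw' = om_lin[OF w'] and lws = om_S_lin[OF w] and lws' = om_S_lin[OF w']
  let ?c = "conv \<Delta> \<omega> (\<lambda>h. \<omega>' (S h))"
  let ?d = "conv \<Delta> \<omega>' (\<lambda>h. \<omega> (S h))"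
  have cB: "?c h \<in> B" for h by (rule L1a[OF lw om_colin[OF w] lws' om_S_anticolin[OF w']])
  have dB: "?d h \<in> B" for h by (rule L1a[OF lw' om_colin[OF w'] lws om_S_anticolin[OF w]])
  show ?thesis
  proof (rule Z_I[where w="?d"])
    show "lin sH sA ?c" by (rule conv_lin[OF lw lws'])
    show "?c h \<in> B" for h by (rule cB)
    show "?d \<in> HB" by (rule HB_I[OF conv_lin[OF lw' lws] dB])
    show "conv \<Delta> ?c ?d = e"
    proof -
      have "conv \<Delta> ?c ?d = conv \<Delta> \<omega> (conv \<Delta> (\<lambda>h. \<omega>' (S h)) ?d)"
        by (rule conv_assoc[OF lw lws' conv_lin[OF lw' lws]])
      also have "conv \<Delta> (\<lambda>h. \<omega>' (S h)) ?d = conv \<Delta> (conv \<Delta> (\<lambda>h. \<omega>' (S h)) \<omega>') (\<lambda>h. \<omega> (S h))"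
        by (rule conv_assoc[OF lws' lw' lws, symmetric])
      finally show ?thesis using om_inv2[OF w'] conv_unitL[OF lws] om_inv1[OF w] by simp
    qed
    show "conv \<Delta> ?d ?c = e"
    proof -
      have "conv \<Delta> ?d ?c = conv \<Delta> \<omega>' (conv \<Delta> (\<lambda>h. \<omega> (S h)) ?c)"
        by (rule conv_assoc[OF lw' lws conv_lin[OF lw lws']])
      also have "conv \<Delta> (\<lambda>h. \<omega> (S h)) ?c = conv \<Delta> (conv \<Delta> (\<lambda>h. \<omega> (S h)) \<omega>) (\<lambda>h. \<omega>' (S h))"
        by (rule conv_assoc[OF lws lw lws', symmetric])
      finally show ?thesis using om_inv2[OF w] conv_unitL[OF lws'] om_inv1[OF w'] by simp
    qed
  next
    fix h k
    have "?c (h * k) = sw \<Delta> h (\<lambda>h1 h2. sw \<Delta> k (\<lambda>k1 k2. \<omega> (h1 * k1) * \<omega>' (S (h2 * k2))))"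
      unfolding conv_sw by (rule sw_mult_eq) (auto intro!: linI basicI2 lw lws' lin_comp[OF lw'])
    also have "\<dots> = sw \<Delta> h (\<lambda>h1 h2. \<omega> h1 * ?c k * \<omega>' (S h2))"
      by (simp add: om_mult[OF w] om_mult[OF w'] S_mult conv_sw sw_cmult sw_multc mult.assoc)
    finally have L: "?c (h * k) = sw \<Delta> h (\<lambda>h1 h2. \<omega> h1 * ?c k * \<omega>' (S h2))" .
    have "sw \<Delta> h (\<lambda>x y. act \<Delta> t u x (?c k) * ?c y)
       = sw \<Delta> h (\<lambda>x y. sw \<Delta> x (\<lambda>p q. sw \<Delta> y (\<lambda>r s. \<omega> p * ?c k * \<omega> (S q) * (\<omega> r * \<omega>' (S s)))))"
      by (simp only: act_indep[OF w cB], simp only: conv_sw, simp only: sw_multc, simp only: sw_cmult)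
    also have "\<dots> = sw4 \<Delta> h (\<lambda>p q r s. \<omega> p * ?c k * \<omega> (S q) * (\<omega> r * \<omega>' (S s)))"
      by (rule sw4_pairs) (auto intro!: linI basicI2 lw lws lws' lin_comp[OF lw] lin_comp[OF lw'])
    also have "\<dots> = sw3 \<Delta> h (\<lambda>p m s. sw \<Delta> m (\<lambda>q r. \<omega> p * ?c k * \<omega> (S q) * (\<omega> r * \<omega>' (S s))))"
      by (rule sw4_mid[symmetric]) (auto intro!: linI basicI2 lw lws lws' lin_comp[OF lw] lin_comp[OF lw'])
    also have "\<dots> = sw3 \<Delta> h (\<lambda>p m s. \<omega> p * ?c k * conv \<Delta> (\<lambda>h. \<omega> (S h)) \<omega> m * \<omega>' (S s))"
      by (intro sw3_cong) (simp add: conv_sw[of "\<lambda>h. \<omega> (S h)" \<omega>] sw_cmult sw_multc mult.assoc)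
    also have "\<dots> = sw3 \<Delta> h (\<lambda>p m s. sA (\<epsilon> m) (\<omega> p * ?c k * \<omega>' (S s)))"
      by (simp add: om_inv2[OF w] cunit_def k_alg_scale_mult1[OF kA] k_alg_scale_mult2[OF kA] k_alg_scaleL[OF kA] k_alg_scaleR[OF kA])
    also have "\<dots> = sw \<Delta> h (\<lambda>p y. \<omega> p * ?c k * \<omega>' (S y))"
      unfolding sw3_def by (intro sw_cong_eq sw_counitL_eq[where sR=sA]) (auto intro!: linI basicI2 lw lws' lin_comp[OF lw'])
    finally show "?c (h * k) = sw \<Delta> h (\<lambda>x y. act \<Delta> t u x (?c k) * ?c y)" using L by simp
  qed
qed

end

context cleft begin

abbreviation "XX \<equiv> XA sH \<Delta> \<epsilon> S sA \<rho> t u"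
abbreviation "CC \<equiv> CA sH \<Delta> S sA \<rho>"

lemma SS_fun: "f \<circ> S \<circ> S = f" by (simp add: fun_eq_iff S_S)

lemma lin_oS: "lin sH sA f \<Longrightarrow> lin sH sA (f \<circ> S)"
  unfolding comp_def by (rule lin_comp[OF _ lin_S[OF lin_id]])

lemma conv_oS: "lin sH sA f \<Longrightarrow> lin sH sA g \<Longrightarrow> conv \<Delta> g f \<circ> S = conv \<Delta> (g \<circ> S) (f \<circ> S)"
  by (simp add: fun_eq_iff conv_S comp_def)

lemma HB_oS: "f \<in> HB \<Longrightarrow> f \<circ> S \<in> HB"
  by (rule HB_I[OF lin_oS[OF HB_lin]]) (simp_all add: HB_B)

lemma e_Z: "e \<in> Zc"
proof (rule Z_I[where w=e])
  show "lin sH sA e" by (rule lin_cunit)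
  show "e h \<in> B" for h by (rule cunit_B)
  show "e \<in> HB" by (rule HB_I[OF lin_cunit cunit_B])
  show "conv \<Delta> e e = e" by (rule conv_unitL[OF lin_cunit])
  then show "conv \<Delta> e e = e" .
next
  fix h k
  have "sw \<Delta> h (\<lambda>x y. act \<Delta> t u x (e k) * e y) = sw \<Delta> h (\<lambda>x y. sA (\<epsilon> k) (sA (\<epsilon> y) (e x)))"
  proof (rule sw_cong_eq)
    fix x y
    have "act \<Delta> t u x (e k) = sA (\<epsilon> k) (act \<Delta> t u x 1)"
      unfolding cunit_def using act_lin_b[OF lin_id, of x] by (simp add: lin_def)
    then show "act \<Delta> t u x (e k) * e y = sA (\<epsilon> k) (sA (\<epsilon> y) (e x))"
      by (simp add: act_one cunit_def k_alg_scaleL[OF kA] k_alg_scaleR[OF kA] module.scale_left_commute[OF modA])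
  qed
  also have "\<dots> = sA (\<epsilon> k) (sw \<Delta> h (\<lambda>x y. sA (\<epsilon> y) (e x)))" by (simp add: sw_scale[OF modA])
  also have "\<dots> = sA (\<epsilon> k) (e h)" by (subst sw_counitR_eq[OF modA lin_cunit]) simp
  also have "\<dots> = e (h * k)" by (simp add: cunit_def eps_mult module.scale_scale[OF modA] mult.commute)
  finally show "e (h * k) = sw \<Delta> h (\<lambda>x y. act \<Delta> t u x (e k) * e y)" ..
qed

lemma eS: "e \<circ> S = e" by (simp add: fun_eq_iff cunit_def eps_S)

lemma X11: "XX One One = Zc" by simp
lemma X21: "XX Two One = Om" by simp
lemma X22: "XX Two Two = {w \<in> HB. w \<circ> S \<in> Zc}" by simp
lemma X12: "XX One Two = {t' \<circ> S | t'. t' \<in> Om}" by simp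

lemma incl: "XX i j \<subseteq> CC i j"
proof (cases i; cases j)
  assume "i = One" "j = One"
  then show ?thesis by (auto simp: Z1_def HomHB_def coinv_def)
next
  assume "i = One" "j = Two"
  then show ?thesis
  proof (clarsimp)
    fix t' assume w: "t' \<in> Om"
    show "t' \<circ> S \<in> HomHA sH sA \<and> (\<forall>h. teq2 sA sH (\<rho> (t' (S h))) (map (\<lambda>(x, y). (t' (S y), S x)) (\<Delta> h)))"
      using lin_HomHA[OF lin_oS[OF om_lin[OF w]]] om_S_anticolin[OF w] by (simp add: anticolin_def)
  qed
next
  assume "i = Two" "j = One"
  then show ?thesis by (auto simp: OmegaA_def colinear_def)
next
  assume "i = Two" "j = Two"
  then show ?thesis
    by (auto simp: HomHB_def intro!: L4 HomHA_lin)
qed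

lemma ident: "e \<in> XX i i"
  by (cases i) (auto simp: e_Z eS intro!: HB_I lin_cunit cunit_B)

lemma comp_closed:
  assumes f: "f \<in> XX i j" and g: "g \<in> XX j l"
  shows "conv \<Delta> g f \<in> XX i l"
proof (cases i; cases j; cases l)
  assume c: "i = One" "j = One" "l = One"
  then show ?thesis using f g Z_conv by simp
next
  assume c: "i = One" "j = One" "l = Two"
  then obtain t' where t': "t' \<in> Om" "g = t' \<circ> S" using g by auto
  have v: "f \<in> Zc" using f c by simp
  have "conv \<Delta> g f = conv \<Delta> t' (f \<circ> S) \<circ> S"
    by (simp add: t'(2) conv_oS om_lin[OF t'(1)] lin_oS Z_lin[OF v] SS_fun)
  moreover have "conv \<Delta> t' (f \<circ> S) \<in> Om" using K[OF v t'(1)] by (simp add: comp_def)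
  ultimately show ?thesis using c by auto
next
  assume c: "i = One" "j = Two" "l = One"
  then obtain t' where t': "t' \<in> Om" "f = t' \<circ> S" using f by auto
  have w: "g \<in> Om" using g c by simp
  show ?thesis using c I[OF w t'(1)] t'(2) by (simp add: comp_def)
next
  assume c: "i = One" "j = Two" "l = Two"
  then obtain t' where t': "t' \<in> Om" "f = t' \<circ> S" using f by auto
  have w: "g \<in> HB" "g \<circ> S \<in> Zc" using g c by auto
  have "conv \<Delta> g f = conv \<Delta> (g \<circ> S) t' \<circ> S"
    by (simp add: t'(2) conv_oS om_lin[OF t'(1)] lin_oS HB_lin[OF w(1)] SS_fun)
  moreover have "conv \<Delta> (g \<circ> S) t' \<in> Om" by (rule J[OF w(2) t'(1)])
  ultimately show ?thesis using c by auto
next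
  assume c: "i = Two" "j = One" "l = One"
  then show ?thesis using f g J by simp
next
  assume c: "i = Two" "j = One" "l = Two"
  then obtain t' where t': "t' \<in> Om" "g = t' \<circ> S" using g by auto
  have w: "f \<in> Om" using f c by simp
  have Zt: "conv \<Delta> t' (f \<circ> S) \<in> Zc" using I[OF t'(1) w] by (simp add: comp_def)
  have eq: "conv \<Delta> g f \<circ> S = conv \<Delta> t' (f \<circ> S)"
    by (simp add: t'(2) conv_oS om_lin[OF t'(1)] om_lin[OF w] lin_oS SS_fun)
  have "conv \<Delta> g f = conv \<Delta> t' (f \<circ> S) \<circ> S" using eq by (metis SS_fun)
  then have "conv \<Delta> g f \<in> HB" using HB_oS[OF Z_HB[OF Zt]] by simp
  then show ?thesis using c eq Zt by simp
next
  assume c: "i = Two" "j = Two" "l = One"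
  have w: "f \<in> HB" "f \<circ> S \<in> Zc" using f c by auto
  have om: "g \<in> Om" using g c by simp
  have "conv \<Delta> g (f \<circ> S \<circ> S) \<in> Om" using K[OF w(2) om] by (simp add: comp_def)
  then show ?thesis using c by (simp add: SS_fun)
next
  assume c: "i = Two" "j = Two" "l = Two"
  have w: "f \<in> HB" "f \<circ> S \<in> Zc" using f c by auto
  have w': "g \<in> HB" "g \<circ> S \<in> Zc" using g c by auto
  have "conv \<Delta> g f \<in> HB" by (rule HB_I[OF conv_lin[OF HB_lin[OF w'(1)] HB_lin[OF w(1)]] conv_B[OF HB_B[OF w'(1)] HB_B[OF w(1)]]])
  moreover have "conv \<Delta> g f \<circ> S \<in> Zc"
    using Z_conv[OF w'(2) w(2)] by (simp add: conv_oS HB_lin[OF w(1)] HB_lin[OF w'(1)])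
  ultimately show ?thesis using c by simp
qed

theorem main:
  "(\<forall>i j. XX i j \<subseteq> CC i j) \<and> (\<forall>i. e \<in> XX i i)
   \<and> (\<forall>i j l f g. f \<in> XX i j \<longrightarrow> g \<in> XX j l \<longrightarrow> conv \<Delta> g f \<in> XX i l)"
  using incl ident comp_closed by blast

end

theorem theorem5p6:
  fixes sH :: "'k::comm_ring_1 \<Rightarrow> 'h::ring_1 \<Rightarrow> 'h"
    and \<Delta> :: "'h \<Rightarrow> ('h \<times> 'h) list" and \<epsilon> :: "'h \<Rightarrow> 'k" and S :: "'h \<Rightarrow> 'h"
    and sA :: "'k \<Rightarrow> 'a::ring_1 \<Rightarrow> 'a" and \<rho> :: "'a \<Rightarrow> ('a \<times> 'h) list"
    and t u :: "'h \<Rightarrow> 'a"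
  assumes hopf: "hopf_algebra sH \<Delta> \<epsilon> S"
    and cocomm: "cocommutative sH \<Delta>"
    and comod: "right_comodule_algebra sA \<rho> sH \<Delta> \<epsilon>"
    and Bcomm: "\<forall>a \<in> coinv sA sH \<rho>. \<forall>b \<in> coinv sA sH \<rho>. a * b = b * a"
    and t_lin: "t \<in> HomHA sH sA" and t_colin: "colinear sA sH \<rho> \<Delta> t"
    and u_lin: "u \<in> HomHA sH sA"
    and tu: "conv \<Delta> t u = cunit sA \<epsilon>" and ut: "conv \<Delta> u t = cunit sA \<epsilon>"
  shows "(\<forall>i j. XA sH \<Delta> \<epsilon> S sA \<rho> t u i j \<subseteq> CA sH \<Delta> S sA \<rho> i j)
       \<and> (\<forall>i. cunit sA \<epsilon> \<in> XA sH \<Delta> \<epsilon> S sA \<rho> t u i i)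
       \<and> (\<forall>i j l f g. f \<in> XA sH \<Delta> \<epsilon> S sA \<rho> t u i j \<longrightarrow> g \<in> XA sH \<Delta> \<epsilon> S sA \<rho> t u j l
            \<longrightarrow> conv \<Delta> g f \<in> XA sH \<Delta> \<epsilon> S sA \<rho> t u i l)"
proof -
  interpret cleft sH \<Delta> \<epsilon> S sA \<rho> t u
    by unfold_locales (use assms in auto)
  show ?thesis by (rule main)
qed


end
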